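(* Let $n\in\mathbb{N}$, let $M\models\mathrm{I}\Delta_0+\exp$, let $K\models\mathrm{I}\Sigma_n+\exp$, and suppose $M\subseteq_{\mathrm{e}}K$. The following are equivalent: (i) $K\models M\text{-}\mathrm{I}\Sigma_{n+1}$; (ii) for every $\Sigma_{n+1}$ formula $\phi(x)$ with parameters from $K$ and every $a\in M$, $K\models\exists c\,\forall x<a\,(\phi(x)\leftrightarrow x\in c)$; (iii) for every $\Pi_n$ formula $\theta(x,y)$ with parameters from $K$ and every $a\in M$, $K\models\exists b\,\forall x<a\,(\exists y\,\theta(x,y)\leftrightarrow\exists y<b\,\theta(x,y))$.
   Context: $M\subseteq_{\mathrm{e}}K$ means $K$ is an end extension of $M$ (every element of $K\setminus M$ exceeds every element of $M$). For $M\subseteq_{\mathrm{e}}K$ models of $\mathrm{I}\Delta_0+\exp$, $K\models M\text{-}\mathrm{I}\Sigma_{n+1}$ means: for every $\Sigma_{n+1}$ formula $\phi(x)$ with parameters from $K$ and every $a\in M$, $K\models \phi(0)\wedge\forall x<a(\phi(x)\to\phi(x+1))\to\forall x<a\,\phi(x)$. For elements $x,c$, "$x\in c$" means that the $x$-th digit of the binary expansion of $c$ is $1$. *)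

theory Defs
  imports Main
begin

datatype trm = Var nat | Zero | One | Plus trm trm | Times trm trm

text \<open>BEx v t f is the bounded quantifier (exists v < t. f), BAll v t f is (forall v < t. f);
  the bound t is evaluated in the outer environment.\<close>
datatype fm =
    Eq trm trm | Lt trm trm | FF
  | Neg fm | Conj fm fm | Disj fm fm | Imp fm fm
  | Ex nat fm | All nat fm
  | BEx nat trm fm | BAll nat trm fm

fun tvars :: "trm \<Rightarrow> nat set" where
  "tvars (Var v) = {v}"
| "tvars Zero = {}"
| "tvars One = {}"
| "tvars (Plus s t) = tvars s \<union> tvars t"
| "tvars (Times s t) = tvars s \<union> tvars t"

fun fv :: "fm \<Rightarrow> nat set" where
  "fv (Eq s t) = tvars s \<union> tvars t"
| "fv (Lt s t) = tvars s \<union> tvars t"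
| "fv FF = {}"
| "fv (Neg f) = fv f"
| "fv (Conj f g) = fv f \<union> fv g"
| "fv (Disj f g) = fv f \<union> fv g"
| "fv (Imp f g) = fv f \<union> fv g"
| "fv (Ex v f) = fv f - {v}"
| "fv (All v f) = fv f - {v}"
| "fv (BEx v t f) = tvars t \<union> (fv f - {v})"
| "fv (BAll v t f) = tvars t \<union> (fv f - {v})"

record 'a struc =
  dom :: "'a set"
  zer :: 'a
  one :: 'a
  pl  :: "'a \<Rightarrow> 'a \<Rightarrow> 'a"
  tm  :: "'a \<Rightarrow> 'a \<Rightarrow> 'a"
  lt  :: "'a \<Rightarrow> 'a \<Rightarrow> bool"

definition struc_ok :: "'a struc \<Rightarrow> bool" where
  "struc_ok K \<longleftrightarrow> zer K \<in> dom K \<and> one K \<in> dom K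
     \<and> (\<forall>x\<in>dom K. \<forall>y\<in>dom K. pl K x y \<in> dom K \<and> tm K x y \<in> dom K)"

definition env_in :: "'a struc \<Rightarrow> (nat \<Rightarrow> 'a) \<Rightarrow> bool" where
  "env_in K e \<longleftrightarrow> (\<forall>i. e i \<in> dom K)"

fun eval :: "'a struc \<Rightarrow> (nat \<Rightarrow> 'a) \<Rightarrow> trm \<Rightarrow> 'a" where
  "eval K e (Var v) = e v"
| "eval K e Zero = zer K"
| "eval K e One = one K"
| "eval K e (Plus s t) = pl K (eval K e s) (eval K e t)"
| "eval K e (Times s t) = tm K (eval K e s) (eval K e t)"

fun sat :: "'a struc \<Rightarrow> (nat \<Rightarrow> 'a) \<Rightarrow> fm \<Rightarrow> bool" where
  "sat K e (Eq s t) = (eval K e s = eval K e t)"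
| "sat K e (Lt s t) = lt K (eval K e s) (eval K e t)"
| "sat K e FF = False"
| "sat K e (Neg f) = (\<not> sat K e f)"
| "sat K e (Conj f g) = (sat K e f \<and> sat K e g)"
| "sat K e (Disj f g) = (sat K e f \<or> sat K e g)"
| "sat K e (Imp f g) = (sat K e f \<longrightarrow> sat K e g)"
| "sat K e (Ex v f) = (\<exists>a\<in>dom K. sat K (e(v := a)) f)"
| "sat K e (All v f) = (\<forall>a\<in>dom K. sat K (e(v := a)) f)"
| "sat K e (BEx v t f) = (\<exists>a\<in>dom K. lt K a (eval K e t) \<and> sat K (e(v := a)) f)"
| "sat K e (BAll v t f) = (\<forall>a\<in>dom K. lt K a (eval K e t) \<longrightarrow> sat K (e(v := a)) f)"

fun delta0 :: "fm \<Rightarrow> bool" where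
  "delta0 (Eq s t) = True"
| "delta0 (Lt s t) = True"
| "delta0 FF = True"
| "delta0 (Neg f) = delta0 f"
| "delta0 (Conj f g) = (delta0 f \<and> delta0 g)"
| "delta0 (Disj f g) = (delta0 f \<and> delta0 g)"
| "delta0 (Imp f g) = (delta0 f \<and> delta0 g)"
| "delta0 (Ex v f) = False"
| "delta0 (All v f) = False"
| "delta0 (BEx v t f) = delta0 f"
| "delta0 (BAll v t f) = delta0 f"

fun hier :: "bool \<Rightarrow> nat \<Rightarrow> fm \<Rightarrow> bool" where
  "hier b 0 f = delta0 f"
| "hier True (Suc n) f = (\<exists>vs g. f = foldr Ex vs g \<and> hier False n g)"
| "hier False (Suc n) f = (\<exists>vs g. f = foldr All vs g \<and> hier True n g)"

abbreviation Sigma :: "nat \<Rightarrow> fm \<Rightarrow> bool" where "Sigma n \<equiv> hier True n"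
abbreviation Pi :: "nat \<Rightarrow> fm \<Rightarrow> bool" where "Pi n \<equiv> hier False n"

definition PAminus :: "'a struc \<Rightarrow> bool" where
  "PAminus K \<longleftrightarrow> struc_ok K \<and>
    (\<forall>x\<in>dom K. \<forall>y\<in>dom K. \<forall>z\<in>dom K.
        pl K x y = pl K y x \<and> pl K (pl K x y) z = pl K x (pl K y z)
      \<and> tm K x y = tm K y x \<and> tm K (tm K x y) z = tm K x (tm K y z)
      \<and> tm K x (pl K y z) = pl K (tm K x y) (tm K x z)
      \<and> pl K x (zer K) = x \<and> tm K x (zer K) = zer K \<and> tm K x (one K) = x
      \<and> \<not> lt K x x \<and> (lt K x y \<and> lt K y z \<longrightarrow> lt K x z)
      \<and> (lt K x y \<or> x = y \<or> lt K y x)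
      \<and> (lt K x y \<longrightarrow> lt K (pl K x z) (pl K y z))
      \<and> (lt K (zer K) z \<and> lt K x y \<longrightarrow> lt K (tm K x z) (tm K y z))
      \<and> (lt K x y \<longrightarrow> (\<exists>w\<in>dom K. pl K x w = y))
      \<and> lt K (zer K) (one K)
      \<and> (lt K (zer K) x \<longrightarrow> one K = x \<or> lt K (one K) x)
      \<and> (zer K = x \<or> lt K (zer K) x))"

definition ind :: "'a struc \<Rightarrow> fm \<Rightarrow> nat \<Rightarrow> bool" where
  "ind K f x \<longleftrightarrow> (\<forall>e. env_in K e \<longrightarrow>
     sat K (e(x := zer K)) f \<and> (\<forall>a\<in>dom K. sat K (e(x := a)) f \<longrightarrow> sat K (e(x := pl K a (one K))) f)
     \<longrightarrow> (\<forall>a\<in>dom K. sat K (e(x := a)) f))"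

text \<open>The graph of exponentiation y = 2^x is given by a Delta_0 formula eps with free
  variables vx, vy.  exp_ok K eps vx vy says that in K this formula satisfies the
  recursion clauses of 2^x and is total (the axiom exp).\<close>
definition Egraph :: "'a struc \<Rightarrow> fm \<Rightarrow> nat \<Rightarrow> nat \<Rightarrow> 'a \<Rightarrow> 'a \<Rightarrow> bool" where
  "Egraph K eps vx vy a b \<longleftrightarrow> sat K ((\<lambda>_. zer K)(vx := a, vy := b)) eps"

definition exp_ok :: "'a struc \<Rightarrow> fm \<Rightarrow> nat \<Rightarrow> nat \<Rightarrow> bool" where
  "exp_ok K eps vx vy \<longleftrightarrow> delta0 eps \<and> vx \<noteq> vy \<and> fv eps \<subseteq> {vx, vy}
    \<and> (\<forall>b\<in>dom K. Egraph K eps vx vy (zer K) b \<longleftrightarrow> b = one K)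
    \<and> (\<forall>a\<in>dom K. \<forall>c\<in>dom K. Egraph K eps vx vy (pl K a (one K)) c
          \<longleftrightarrow> (\<exists>b\<in>dom K. Egraph K eps vx vy a b \<and> c = pl K b b))
    \<and> (\<forall>a\<in>dom K. \<exists>b\<in>dom K. Egraph K eps vx vy a b)"

definition IDelta0_exp :: "'a struc \<Rightarrow> fm \<Rightarrow> nat \<Rightarrow> nat \<Rightarrow> bool" where
  "IDelta0_exp K eps vx vy \<longleftrightarrow> PAminus K \<and> (\<forall>f x. delta0 f \<longrightarrow> ind K f x) \<and> exp_ok K eps vx vy"

definition ISigma_exp :: "nat \<Rightarrow> 'a struc \<Rightarrow> fm \<Rightarrow> nat \<Rightarrow> nat \<Rightarrow> bool" where
  "ISigma_exp n K eps vx vy \<longleftrightarrow> PAminus K \<and> (\<forall>f x. Sigma n f \<longrightarrow> ind K f x) \<and> exp_ok K eps vx vy"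

text \<open>x \<in> c : the x-th binary digit of c is 1, i.e. floor(c / 2^x) is odd.\<close>
definition bit_in :: "'a struc \<Rightarrow> fm \<Rightarrow> nat \<Rightarrow> nat \<Rightarrow> 'a \<Rightarrow> 'a \<Rightarrow> bool" where
  "bit_in K eps vx vy x c \<longleftrightarrow> (\<exists>p\<in>dom K. Egraph K eps vx vy x p \<and>
     (\<exists>q\<in>dom K. \<exists>r\<in>dom K. c = pl K (tm K q p) r \<and> lt K r p
        \<and> (\<exists>s\<in>dom K. q = pl K (pl K s s) (one K))))"

definition restr :: "'a struc \<Rightarrow> 'a set \<Rightarrow> 'a struc" where
  "restr K M = K\<lparr>dom := M\<rparr>"

definition end_ext :: "'a set \<Rightarrow> 'a struc \<Rightarrow> bool" where
  "end_ext M K \<longleftrightarrow> struc_ok K \<and> M \<subseteq> dom K \<and> zer K \<in> M \<and> one K \<in> M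
    \<and> (\<forall>x\<in>M. \<forall>y\<in>M. pl K x y \<in> M \<and> tm K x y \<in> M)
    \<and> (\<forall>u\<in>M. \<forall>v\<in>dom K - M. lt K u v)"

definition M_ISigma :: "nat \<Rightarrow> 'a set \<Rightarrow> 'a struc \<Rightarrow> bool" where
  "M_ISigma k M K \<longleftrightarrow> (\<forall>f x e a. Sigma k f \<and> env_in K e \<and> a \<in> M \<longrightarrow>
     sat K (e(x := zer K)) f
     \<and> (\<forall>b\<in>dom K. lt K b a \<longrightarrow> sat K (e(x := b)) f \<longrightarrow> sat K (e(x := pl K b (one K))) f)
     \<longrightarrow> (\<forall>b\<in>dom K. lt K b a \<longrightarrow> sat K (e(x := b)) f))"

end

theory Submission
  imports Defs
begin


lemma eval_coinc: "(\<forall>i\<in>tvars t. e i = e' i) \<Longrightarrow> eval K e t = eval K e' t"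
  by (induction t) auto

lemma sat_coinc: "(\<forall>i\<in>fv f. e i = e' i) \<Longrightarrow> sat K e f = sat K e' f"
proof (induction f arbitrary: e e')
  case (Eq s t) then show ?case using eval_coinc[of s e e' K] eval_coinc[of t e e' K] by auto
next
  case (Lt s t) then show ?case using eval_coinc[of s e e' K] eval_coinc[of t e e' K] by auto
next
  case (Ex v f)
  have "\<And>a. sat K (e(v:=a)) f = sat K (e'(v:=a)) f" using Ex.IH Ex.prems by auto
  then show ?case by simp
next
  case (All v f)
  have "\<And>a. sat K (e(v:=a)) f = sat K (e'(v:=a)) f" using All.IH All.prems by auto
  then show ?case by simp
next
  case (BEx v t f)
  have "\<And>a. sat K (e(v:=a)) f = sat K (e'(v:=a)) f" using BEx.IH BEx.prems by auto
  moreover have "eval K e t = eval K e' t" using eval_coinc[of t e e' K] BEx.prems by auto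
  ultimately show ?case by simp
next
  case (BAll v t f)
  have "\<And>a. sat K (e(v:=a)) f = sat K (e'(v:=a)) f" using BAll.IH BAll.prems by auto
  moreover have "eval K e t = eval K e' t" using eval_coinc[of t e e' K] BAll.prems by auto
  ultimately show ?case by simp
next
  case (Neg f) then show ?case by simp
next
  case (Conj f g) then show ?case by (metis UnCI fv.simps(5) sat.simps(5))
next
  case (Disj f g) then show ?case by (metis UnCI fv.simps(6) sat.simps(6))
next
  case (Imp f g) then show ?case by (metis UnCI fv.simps(7) sat.simps(7))
qed auto

lemma finite_tvars: "finite (tvars t)" by (induction t) auto
lemma finite_fv: "finite (fv f)" by (induction f) (auto simp: finite_tvars)

fun rent :: "(nat \<Rightarrow> nat) \<Rightarrow> trm \<Rightarrow> trm" where
  "rent s (Var v) = Var (s v)"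
| "rent s Zero = Zero"
| "rent s One = One"
| "rent s (Plus a b) = Plus (rent s a) (rent s b)"
| "rent s (Times a b) = Times (rent s a) (rent s b)"

fun ren :: "(nat \<Rightarrow> nat) \<Rightarrow> fm \<Rightarrow> fm" where
  "ren s (Eq a b) = Eq (rent s a) (rent s b)"
| "ren s (Lt a b) = Lt (rent s a) (rent s b)"
| "ren s FF = FF"
| "ren s (Neg f) = Neg (ren s f)"
| "ren s (Conj f g) = Conj (ren s f) (ren s g)"
| "ren s (Disj f g) = Disj (ren s f) (ren s g)"
| "ren s (Imp f g) = Imp (ren s f) (ren s g)"
| "ren s (Ex v f) = Ex (s v) (ren s f)"
| "ren s (All v f) = All (s v) (ren s f)"
| "ren s (BEx v t f) = BEx (s v) (rent s t) (ren s f)"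
| "ren s (BAll v t f) = BAll (s v) (rent s t) (ren s f)"

lemma eval_rent: "eval K e (rent s t) = eval K (e \<circ> s) t"
  by (induction t) auto

lemma upd_comp_inj: "inj s \<Longrightarrow> (e(s v := a)) \<circ> s = (e \<circ> s)(v := a)"
  by (auto simp: fun_eq_iff inj_eq)

lemma sat_ren: "inj s \<Longrightarrow> sat K e (ren s f) = sat K (e \<circ> s) f"
  by (induction f arbitrary: e) (auto simp: eval_rent upd_comp_inj)

lemma delta0_ren: "delta0 (ren s f) = delta0 f"
  by (induction f) auto

lemma ren_foldr_Ex: "ren s (foldr Ex vs g) = foldr Ex (map s vs) (ren s g)"
  by (induction vs) auto
lemma ren_foldr_All: "ren s (foldr All vs g) = foldr All (map s vs) (ren s g)"
  by (induction vs) auto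

lemma hier_ren: "hier b j f \<Longrightarrow> hier b j (ren s f)"
proof (induction j arbitrary: b f)
  case 0 then show ?case by (simp add: delta0_ren)
next
  case (Suc j)
  show ?case
  proof (cases b)
    case True
    with Suc.prems obtain vs g where "f = foldr Ex vs g" "hier False j g" by auto
    then show ?thesis using True Suc.IH by (auto simp: ren_foldr_Ex)
  next
    case False
    with Suc.prems obtain vs g where "f = foldr All vs g" "hier True j g" by auto
    then show ?thesis using False Suc.IH by (auto simp: ren_foldr_All)
  qed
qed

lemma hier_Suc_of: "hier b j f \<Longrightarrow> hier b (Suc j) f"
proof (induction j arbitrary: b f)
  case 0
  then show ?case by (cases b) (auto intro!: exI[of _ "[]"])
next
  case (Suc j)
  show ?case
  proof (cases b)
    case True
    with Suc.prems obtain vs g where fe: "f = foldr Ex vs g" and hg: "hier False j g" by auto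
    from hg have hg': "hier False (Suc j) g" by (rule Suc.IH)
    have bt: "b = True" using True by simp
    show ?thesis unfolding bt using fe hg' by (subst hier.simps) blast
  next
    case False
    with Suc.prems obtain vs g where fe: "f = foldr All vs g" and hg: "hier True j g" by auto
    from hg have hg': "hier True (Suc j) g" by (rule Suc.IH)
    have bt: "b = False" using False by simp
    show ?thesis unfolding bt using fe hg' by (subst hier.simps) blast
  qed
qed

lemma hier_Suc_dual: "hier (\<not>b) j f \<Longrightarrow> hier b (Suc j) f"
  by (cases b) (auto intro!: exI[of _ "[]"])

lemma hier_mono: "hier b j f \<Longrightarrow> j \<le> k \<Longrightarrow> hier b k f"
  by (induction k) (auto simp: le_Suc_eq hier_Suc_of)

lemma hier_delta0: "delta0 f \<Longrightarrow> hier b j f"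
  using hier_mono[of b 0 f j] by simp



definition Cl :: "'a struc \<Rightarrow> bool \<Rightarrow> nat \<Rightarrow> ((nat \<Rightarrow> 'a) \<Rightarrow> bool) \<Rightarrow> bool" where
  "Cl K b j P \<longleftrightarrow> (\<exists>f. hier b j f \<and> (\<forall>e. env_in K e \<longrightarrow> P e = sat K e f))"

definition indep :: "'a struc \<Rightarrow> ((nat \<Rightarrow> 'a) \<Rightarrow> bool) \<Rightarrow> nat set \<Rightarrow> bool" where
  "indep K P S \<longleftrightarrow> finite S \<and> (\<forall>e e'. env_in K e \<longrightarrow> env_in K e' \<longrightarrow> (\<forall>i\<in>S. e i = e' i) \<longrightarrow> P e = P e')"

definition sw :: "nat \<Rightarrow> nat \<Rightarrow> nat \<Rightarrow> nat" where
  "sw v w i = (if i = v then w else if i = w then v else i)"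

lemma sw_inj: "inj (sw v w)"
  unfolding inj_def sw_def by auto

lemma env_in_upd: "env_in K e \<Longrightarrow> a \<in> dom K \<Longrightarrow> env_in K (e(v:=a))"
  unfolding env_in_def by auto

lemma env_in_comp: "env_in K e \<Longrightarrow> env_in K (e \<circ> s)"
  unfolding env_in_def by auto

lemma fresh_var: "finite (S::nat set) \<Longrightarrow> \<exists>w. w \<notin> S"
  using ex_new_if_finite[OF infinite_UNIV_nat] by blast

lemma ren_step:
  assumes "finite S"
  shows "\<exists>w s. w \<notin> S \<and> w \<noteq> v \<and> w \<notin> fv F \<and> inj s \<and> (\<forall>e a. sat K (e(w:=a)) (ren s F) = sat K (e(v:=a)) F)"
proof -
  obtain w where w: "w \<notin> S \<union> fv F \<union> {v}" using fresh_var[of "S \<union> fv F \<union> {v}"] assms finite_fv by auto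
  have "sat K (e(w:=a)) (ren (sw v w) F) = sat K (e(v:=a)) F" for e a
  proof -
    have "sat K (e(w:=a)) (ren (sw v w) F) = sat K ((e(w:=a)) \<circ> sw v w) F" by (rule sat_ren[OF sw_inj])
    also have "\<dots> = sat K (e(v:=a)) F" by (rule sat_coinc) (use w in \<open>auto simp: sw_def\<close>)
    finally show ?thesis .
  qed
  then show ?thesis using w sw_inj by blast
qed

lemma Cl_ext: "Cl K b j P \<Longrightarrow> (\<And>e. env_in K e \<Longrightarrow> P e = Q e) \<Longrightarrow> Cl K b j Q"
  unfolding Cl_def by metis

lemma Cl_supp: "Cl K b j P \<Longrightarrow> \<exists>S. indep K P S"
  unfolding Cl_def indep_def by (metis finite_fv sat_coinc)

lemma indep_upd: "indep K P S \<Longrightarrow> i \<notin> S \<Longrightarrow> env_in K e \<Longrightarrow> a \<in> dom K \<Longrightarrow> P (e(i:=a)) = P e"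
  unfolding indep_def by (metis env_in_upd fun_upd_other)

lemma indep_finite: "indep K P S \<Longrightarrow> finite S" unfolding indep_def by auto

lemma Cl_mono: "Cl K b j P \<Longrightarrow> j \<le> k \<Longrightarrow> Cl K b k P"
  unfolding Cl_def using hier_mono by blast

lemma Cl_dual: "Cl K (\<not>b) j P \<Longrightarrow> Cl K b (Suc j) P"
  unfolding Cl_def using hier_Suc_dual by blast

lemma Cl_d0: "delta0 f \<Longrightarrow> Cl K b j (\<lambda>e. sat K e f)"
  unfolding Cl_def using hier_delta0 by blast

lemma Cl_0: "Cl K b 0 P \<Longrightarrow> Cl K b' j P"
  unfolding Cl_def using hier_delta0 by auto

lemma Cl_ren: "inj s \<Longrightarrow> Cl K b j P \<Longrightarrow> Cl K b j (\<lambda>e. P (e \<circ> s))"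
  unfolding Cl_def using hier_ren sat_ren env_in_comp by metis

lemma sat_foldr_neg:
  assumes "\<forall>e. env_in K e \<longrightarrow> sat K e g' = (\<not> sat K e g)" "env_in K e"
  shows "sat K e (foldr All vs g') = (\<not> sat K e (foldr Ex vs g))"
    "sat K e (foldr Ex vs g') = (\<not> sat K e (foldr All vs g))"
  using assms(2) by (induction vs arbitrary: e) (auto simp: assms(1) env_in_upd)

lemma hier_neg: "hier b j f \<Longrightarrow> \<exists>f'. hier (\<not>b) j f' \<and> (\<forall>e. env_in K e \<longrightarrow> sat K e f' = (\<not> sat K e f))"
proof (induction j arbitrary: b f)
  case 0
  then show ?case by (intro exI[of _ "Neg f"]) auto
next
  case (Suc j)
  show ?case
  proof (cases b)
    case True
    with Suc.prems obtain vs g where fe: "f = foldr Ex vs g" and hg: "hier False j g" by auto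
    from Suc.IH[OF hg] obtain g' where "hier True j g'" "\<forall>e. env_in K e \<longrightarrow> sat K e g' = (\<not> sat K e g)" by auto
    then show ?thesis using True fe sat_foldr_neg(1)[of K g' g] by (intro exI[of _ "foldr All vs g'"]) auto
  next
    case False
    with Suc.prems obtain vs g where fe: "f = foldr All vs g" and hg: "hier True j g" by auto
    from Suc.IH[OF hg] obtain g' where "hier False j g'" "\<forall>e. env_in K e \<longrightarrow> sat K e g' = (\<not> sat K e g)" by auto
    then show ?thesis using False fe sat_foldr_neg(2)[of K g' g] by (intro exI[of _ "foldr Ex vs g'"]) auto
  qed
qed

lemma Cl_neg: "Cl K b j P \<Longrightarrow> Cl K (\<not>b) j (\<lambda>e. \<not> P e)"
  unfolding Cl_def using hier_neg by metis

lemma Cl_neg': "Cl K (\<not>b) j P \<Longrightarrow> Cl K b j (\<lambda>e. \<not> P e)"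
  using Cl_neg[of K "\<not>b" j P] by simp

lemma Cl_ex: "Cl K True (Suc j) P \<Longrightarrow> Cl K True (Suc j) (\<lambda>e. \<exists>a\<in>dom K. P (e(v:=a)))"
proof -
  assume "Cl K True (Suc j) P"
  then obtain f where f: "hier True (Suc j) f" "\<forall>e. env_in K e \<longrightarrow> P e = sat K e f" unfolding Cl_def by blast
  then obtain vs g where "f = foldr Ex vs g" "hier False j g" by auto
  then have "hier True (Suc j) (Ex v f)" by (subst hier.simps) (metis foldr_Cons o_apply)
  moreover have "env_in K e \<Longrightarrow> (\<exists>a\<in>dom K. P (e(v:=a))) = sat K e (Ex v f)" for e
  proof -
    assume "env_in K e"
    then have "\<forall>a\<in>dom K. P (e(v:=a)) = sat K (e(v:=a)) f" by (simp add: f(2) env_in_upd)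
    then show ?thesis by simp
  qed
  ultimately show ?thesis unfolding Cl_def by blast
qed

lemma Cl_all: "Cl K False (Suc j) P \<Longrightarrow> Cl K False (Suc j) (\<lambda>e. \<forall>a\<in>dom K. P (e(v:=a)))"
proof -
  assume "Cl K False (Suc j) P"
  then obtain f where f: "hier False (Suc j) f" "\<forall>e. env_in K e \<longrightarrow> P e = sat K e f" unfolding Cl_def by blast
  then obtain vs g where "f = foldr All vs g" "hier True j g" by auto
  then have "hier False (Suc j) (All v f)" by (subst hier.simps) (metis foldr_Cons o_apply)
  moreover have "env_in K e \<Longrightarrow> (\<forall>a\<in>dom K. P (e(v:=a))) = sat K e (All v f)" for e
  proof -
    assume "env_in K e"
    then have "\<forall>a\<in>dom K. P (e(v:=a)) = sat K (e(v:=a)) f" by (simp add: f(2) env_in_upd)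
    then show ?thesis by simp
  qed
  ultimately show ?thesis unfolding Cl_def by blast
qed

lemma Cl0_conj: "Cl K b 0 P \<Longrightarrow> Cl K b 0 Q \<Longrightarrow> Cl K b 0 (\<lambda>e. P e \<and> Q e)"
  unfolding Cl_def by (metis hier.simps(1) delta0.simps(5) sat.simps(5))
lemma Cl0_disj: "Cl K b 0 P \<Longrightarrow> Cl K b 0 Q \<Longrightarrow> Cl K b 0 (\<lambda>e. P e \<or> Q e)"
  unfolding Cl_def by (metis hier.simps(1) delta0.simps(6) sat.simps(6))
lemma Cl0_bex: "Cl K b 0 P \<Longrightarrow> Cl K b 0 (\<lambda>e. \<exists>a\<in>dom K. lt K a (eval K e t) \<and> P (e(u:=a)))"
  unfolding Cl_def
proof (elim exE conjE)
  fix f assume f: "hier b 0 f" "\<forall>e. env_in K e \<longrightarrow> P e = sat K e f"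
  show "\<exists>f. hier b 0 f \<and> (\<forall>e. env_in K e \<longrightarrow> (\<exists>a\<in>dom K. lt K a (eval K e t) \<and> P (e(u:=a))) = sat K e f)"
    using f by (intro exI[of _ "BEx u t f"]) (simp add: env_in_upd)
qed
lemma Cl0_ball: "Cl K b 0 P \<Longrightarrow> Cl K b 0 (\<lambda>e. \<forall>a\<in>dom K. lt K a (eval K e t) \<longrightarrow> P (e(u:=a)))"
  unfolding Cl_def
proof (elim exE conjE)
  fix f assume f: "hier b 0 f" "\<forall>e. env_in K e \<longrightarrow> P e = sat K e f"
  show "\<exists>f. hier b 0 f \<and> (\<forall>e. env_in K e \<longrightarrow> (\<forall>a\<in>dom K. lt K a (eval K e t) \<longrightarrow> P (e(u:=a))) = sat K e f)"
    using f by (intro exI[of _ "BAll u t f"]) (simp add: env_in_upd)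
qed
lemma Cl0_eq: "Cl K b 0 (\<lambda>e. eval K e s = eval K e t)"
  using Cl_d0[of "Eq s t" K b 0] by simp
lemma Cl0_lt: "Cl K b 0 (\<lambda>e. lt K (eval K e s) (eval K e t))"
  using Cl_d0[of "Lt s t" K b 0] by simp
lemma Cl0_neg: "Cl K b 0 P \<Longrightarrow> Cl K b 0 (\<lambda>e. \<not> P e)"
  unfolding Cl_def by (metis hier.simps(1) delta0.simps(4) sat.simps(4))
lemma Cl0_True: "Cl K b 0 (\<lambda>e. True)"
  unfolding Cl_def by (rule exI[of _ "Neg FF"]) auto



lemma Cl_Sigma_repr: "Cl K True (Suc i) P \<Longrightarrow> \<exists>vs g. hier False i g \<and> (\<forall>e. env_in K e \<longrightarrow> P e = sat K e (foldr Ex vs g))"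
  unfolding Cl_def by auto

lemma Cl_of_repr: "hier False i g \<Longrightarrow> Cl K True (Suc i) (\<lambda>e. sat K e (foldr Ex vs g))"
  unfolding Cl_def by (rule exI[of _ "foldr Ex vs g"]) auto

lemma Cl_sat: "hier b j f \<Longrightarrow> Cl K b j (\<lambda>e. sat K e f)"
  unfolding Cl_def by auto

lemma Cl_ext2: "Cl K b j X \<and> Cl K b j Y \<Longrightarrow> (\<And>e. env_in K e \<Longrightarrow> X e = X' e) \<Longrightarrow> (\<And>e. env_in K e \<Longrightarrow> Y e = Y' e) \<Longrightarrow> Cl K b j X' \<and> Cl K b j Y'"
  using Cl_ext by blast

lemma conj_step1:
  assumes nz: "dom K \<noteq> {}"
    and pc: "\<And>P Q. Cl K False i P \<Longrightarrow> Cl K False i Q \<Longrightarrow> Cl K False i (\<lambda>e. P e \<and> Q e) \<and> Cl K False i (\<lambda>e. P e \<or> Q e)"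
    and G: "Cl K False i G"
  shows "length ws = N \<Longrightarrow> hier False i h \<Longrightarrow> Cl K True (Suc i) (\<lambda>e. G e \<and> sat K e (foldr Ex ws h)) \<and> Cl K True (Suc i) (\<lambda>e. G e \<or> sat K e (foldr Ex ws h))"
proof (induction N arbitrary: ws h)
  case 0
  then have "Cl K False i (\<lambda>e. sat K e h)" using Cl_sat by blast
  then show ?case using pc[OF G] 0 Cl_dual[of K "True" i] by auto
next
  case (Suc N)
  then obtain v ws' where ws: "ws = v # ws'" and len: "length ws' = N" by (cases ws) auto
  let ?F = "foldr Ex ws' h"
  obtain S where S: "indep K G S" using Cl_supp[OF G] by blast
  obtain w s where w: "w \<notin> S" "w \<noteq> v" "w \<notin> fv ?F" "inj s"
    and sw: "\<And>e a. sat K (e(w:=a)) (ren s ?F) = sat K (e(v:=a)) ?F"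
    using ren_step[OF indep_finite[OF S], of v ?F K] by blast
  have rf: "ren s ?F = foldr Ex (map s ws') (ren s h)" by (rule ren_foldr_Ex)
  have IH: "Cl K True (Suc i) (\<lambda>e. G e \<and> sat K e (ren s ?F)) \<and> Cl K True (Suc i) (\<lambda>e. G e \<or> sat K e (ren s ?F))"
    unfolding rf by (rule Suc.IH) (use len Suc.prems hier_ren in auto)
  have Gu: "env_in K e \<Longrightarrow> a \<in> dom K \<Longrightarrow> G (e(w:=a)) = G e" for e a using indep_upd[OF S w(1)] by blast
  have 1: "Cl K True (Suc i) (\<lambda>e. G e \<and> sat K e (foldr Ex ws h))"
  proof (rule Cl_ext[OF Cl_ex[OF IH[THEN conjunct1], of w]])
    fix e assume e: "env_in K e"
    show "(\<exists>a\<in>dom K. G (e(w:=a)) \<and> sat K (e(w:=a)) (ren s ?F)) = (G e \<and> sat K e (foldr Ex ws h))"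
      using Gu[OF e] sw ws by auto
  qed
  have 2: "Cl K True (Suc i) (\<lambda>e. G e \<or> sat K e (foldr Ex ws h))"
  proof (rule Cl_ext[OF Cl_ex[OF IH[THEN conjunct2], of w]])
    fix e assume e: "env_in K e"
    show "(\<exists>a\<in>dom K. G (e(w:=a)) \<or> sat K (e(w:=a)) (ren s ?F)) = (G e \<or> sat K e (foldr Ex ws h))"
      using Gu[OF e] sw ws nz by auto
  qed
  show ?case using 1 2 by blast
qed

lemma conj_step2:
  assumes nz: "dom K \<noteq> {}"
    and pc: "\<And>P Q. Cl K False i P \<Longrightarrow> Cl K False i Q \<Longrightarrow> Cl K False i (\<lambda>e. P e \<and> Q e) \<and> Cl K False i (\<lambda>e. P e \<or> Q e)"
    and Q: "Cl K True (Suc i) Q"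
  shows "length vs = N \<Longrightarrow> hier False i g \<Longrightarrow> Cl K True (Suc i) (\<lambda>e. sat K e (foldr Ex vs g) \<and> Q e) \<and> Cl K True (Suc i) (\<lambda>e. sat K e (foldr Ex vs g) \<or> Q e)"
proof (induction N arbitrary: vs g)
  case 0
  then have G: "Cl K False i (\<lambda>e. sat K e g)" using Cl_sat by blast
  obtain ws h where h: "hier False i h" "\<forall>e. env_in K e \<longrightarrow> Q e = sat K e (foldr Ex ws h)"
    using Cl_Sigma_repr[OF Q] by blast
  have "Cl K True (Suc i) (\<lambda>e. sat K e g \<and> sat K e (foldr Ex ws h)) \<and> Cl K True (Suc i) (\<lambda>e. sat K e g \<or> sat K e (foldr Ex ws h))"
    by (rule conj_step1[OF nz pc G refl h(1)])
  then show ?case by (rule Cl_ext2) (use 0 h(2) in auto)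
next
  case (Suc N)
  then obtain v vs' where vs: "vs = v # vs'" and len: "length vs' = N" by (cases vs) auto
  let ?F = "foldr Ex vs' g"
  obtain S where S: "indep K Q S" using Cl_supp[OF Q] by blast
  obtain w s where w: "w \<notin> S" "w \<noteq> v" "w \<notin> fv ?F" "inj s"
    and sw: "\<And>e a. sat K (e(w:=a)) (ren s ?F) = sat K (e(v:=a)) ?F"
    using ren_step[OF indep_finite[OF S], of v ?F K] by blast
  have rf: "ren s ?F = foldr Ex (map s vs') (ren s g)" by (rule ren_foldr_Ex)
  have IH: "Cl K True (Suc i) (\<lambda>e. sat K e (ren s ?F) \<and> Q e) \<and> Cl K True (Suc i) (\<lambda>e. sat K e (ren s ?F) \<or> Q e)"
    unfolding rf by (rule Suc.IH) (use len Suc.prems hier_ren in auto)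
  have Qu: "env_in K e \<Longrightarrow> a \<in> dom K \<Longrightarrow> Q (e(w:=a)) = Q e" for e a using indep_upd[OF S w(1)] by blast
  have 1: "Cl K True (Suc i) (\<lambda>e. sat K e (foldr Ex vs g) \<and> Q e)"
  proof (rule Cl_ext[OF Cl_ex[OF IH[THEN conjunct1], of w]])
    fix e assume e: "env_in K e"
    show "(\<exists>a\<in>dom K. sat K (e(w:=a)) (ren s ?F) \<and> Q (e(w:=a))) = (sat K e (foldr Ex vs g) \<and> Q e)"
      using Qu[OF e] sw vs by auto
  qed
  have 2: "Cl K True (Suc i) (\<lambda>e. sat K e (foldr Ex vs g) \<or> Q e)"
  proof (rule Cl_ext[OF Cl_ex[OF IH[THEN conjunct2], of w]])
    fix e assume e: "env_in K e"
    show "(\<exists>a\<in>dom K. sat K (e(w:=a)) (ren s ?F) \<or> Q (e(w:=a))) = (sat K e (foldr Ex vs g) \<or> Q e)"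
      using Qu[OF e] sw vs nz by auto
  qed
  show ?case using 1 2 by blast
qed

lemma Cl_conj_disj_S:
  assumes nz: "dom K \<noteq> {}"
  shows "Cl K True j P \<Longrightarrow> Cl K True j Q \<Longrightarrow> Cl K True j (\<lambda>e. P e \<and> Q e) \<and> Cl K True j (\<lambda>e. P e \<or> Q e)"
proof (induction j arbitrary: P Q)
  case 0
  then show ?case using Cl0_conj Cl0_disj by blast
next
  case (Suc i)
  have pc: "Cl K False i (\<lambda>e. P e \<and> Q e) \<and> Cl K False i (\<lambda>e. P e \<or> Q e)"
    if "Cl K False i P" "Cl K False i Q" for P Q
  proof -
    have nP: "Cl K True i (\<lambda>e. \<not> P e)" and nQ: "Cl K True i (\<lambda>e. \<not> Q e)"
      using Cl_neg[OF that(1)] Cl_neg[OF that(2)] by auto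
    have a: "Cl K False i (\<lambda>e. \<not> (\<not> P e \<or> \<not> Q e))"
      using Cl_neg[OF Suc.IH[OF nP nQ, THEN conjunct2]] by simp
    have b: "Cl K False i (\<lambda>e. \<not> (\<not> P e \<and> \<not> Q e))"
      using Cl_neg[OF Suc.IH[OF nP nQ, THEN conjunct1]] by simp
    show ?thesis using a b by (auto elim!: Cl_ext)
  qed
  obtain vs g where g: "hier False i g" "\<forall>e. env_in K e \<longrightarrow> P e = sat K e (foldr Ex vs g)"
    using Cl_Sigma_repr[OF Suc.prems(1)] by blast
  have "Cl K True (Suc i) (\<lambda>e. sat K e (foldr Ex vs g) \<and> Q e) \<and> Cl K True (Suc i) (\<lambda>e. sat K e (foldr Ex vs g) \<or> Q e)"
    by (rule conj_step2[OF nz pc Suc.prems(2) refl g(1)])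
  then show ?case by (rule Cl_ext2) (use g(2) in auto)
qed

lemma Cl_conj: "dom K \<noteq> {} \<Longrightarrow> Cl K b j P \<Longrightarrow> Cl K b j Q \<Longrightarrow> Cl K b j (\<lambda>e. P e \<and> Q e)"
  and Cl_disj: "dom K \<noteq> {} \<Longrightarrow> Cl K b j P \<Longrightarrow> Cl K b j Q \<Longrightarrow> Cl K b j (\<lambda>e. P e \<or> Q e)"
proof -
  assume nz: "dom K \<noteq> {}" and P: "Cl K b j P" and Q: "Cl K b j Q"
  have "Cl K b j (\<lambda>e. P e \<and> Q e) \<and> Cl K b j (\<lambda>e. P e \<or> Q e)"
  proof (cases b)
    case True then show ?thesis using Cl_conj_disj_S[OF nz, of j P Q] P Q by simp
  next
    case False
    have nP: "Cl K True j (\<lambda>e. \<not> P e)" and nQ: "Cl K True j (\<lambda>e. \<not> Q e)"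
      using Cl_neg[OF P] Cl_neg[OF Q] False by auto
    have a: "Cl K False j (\<lambda>e. \<not> (\<not> P e \<or> \<not> Q e))"
      using Cl_neg[OF Cl_conj_disj_S[OF nz nP nQ, THEN conjunct2]] by simp
    have b: "Cl K False j (\<lambda>e. \<not> (\<not> P e \<and> \<not> Q e))"
      using Cl_neg[OF Cl_conj_disj_S[OF nz nP nQ, THEN conjunct1]] by simp
    show ?thesis using a b False by (auto elim!: Cl_ext)
  qed
  then show "Cl K b j (\<lambda>e. P e \<and> Q e)" "Cl K b j (\<lambda>e. P e \<or> Q e)" by auto
qed



locale pam =
  fixes K :: "'a struc"
  assumes PA: "PAminus K"
begin

abbreviation D where "D \<equiv> dom K"
abbreviation zz ("\<zero>") where "zz \<equiv> zer K"
abbreviation oo ("\<one>") where "oo \<equiv> one K"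
abbreviation padd (infixl "\<oplus>" 65) where "padd x y \<equiv> pl K x y"
abbreviation pmul (infixl "\<otimes>" 70) where "pmul x y \<equiv> tm K x y"
abbreviation pless (infix "\<prec>" 50) where "pless x y \<equiv> lt K x y"
abbreviation ple (infix "\<preceq>" 50) where "ple x y \<equiv> lt K x y \<or> x = y"

lemma ok: "struc_ok K" using PA unfolding PAminus_def by auto
lemma zD[simp]: "\<zero> \<in> D" using ok unfolding struc_ok_def by auto
lemma oD[simp]: "\<one> \<in> D" using ok unfolding struc_ok_def by auto
lemma addD[simp]: "x \<in> D \<Longrightarrow> y \<in> D \<Longrightarrow> x \<oplus> y \<in> D" using ok unfolding struc_ok_def by auto
lemma mulD[simp]: "x \<in> D \<Longrightarrow> y \<in> D \<Longrightarrow> x \<otimes> y \<in> D" using ok unfolding struc_ok_def by auto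
lemma nz: "D \<noteq> {}" using zD by blast

lemma ax0: assumes "x \<in> D" "y \<in> D" "z \<in> D" shows
 "pl K x y = pl K y x \<and> pl K (pl K x y) z = pl K x (pl K y z)
      \<and> tm K x y = tm K y x \<and> tm K (tm K x y) z = tm K x (tm K y z)
      \<and> tm K x (pl K y z) = pl K (tm K x y) (tm K x z)
      \<and> pl K x (zer K) = x \<and> tm K x (zer K) = zer K \<and> tm K x (one K) = x
      \<and> \<not> lt K x x \<and> (lt K x y \<and> lt K y z \<longrightarrow> lt K x z)
      \<and> (lt K x y \<or> x = y \<or> lt K y x)
      \<and> (lt K x y \<longrightarrow> lt K (pl K x z) (pl K y z))
      \<and> (lt K (zer K) z \<and> lt K x y \<longrightarrow> lt K (tm K x z) (tm K y z))
      \<and> (lt K x y \<longrightarrow> (\<exists>w\<in>dom K. pl K x w = y))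
      \<and> lt K (zer K) (one K)
      \<and> (lt K (zer K) x \<longrightarrow> one K = x \<or> lt K (one K) x)
      \<and> (zer K = x \<or> lt K (zer K) x)"
proof -
  have "\<forall>x\<in>D. \<forall>y\<in>D. \<forall>z\<in>D. pl K x y = pl K y x \<and> pl K (pl K x y) z = pl K x (pl K y z)
      \<and> tm K x y = tm K y x \<and> tm K (tm K x y) z = tm K x (tm K y z)
      \<and> tm K x (pl K y z) = pl K (tm K x y) (tm K x z)
      \<and> pl K x (zer K) = x \<and> tm K x (zer K) = zer K \<and> tm K x (one K) = x
      \<and> \<not> lt K x x \<and> (lt K x y \<and> lt K y z \<longrightarrow> lt K x z)
      \<and> (lt K x y \<or> x = y \<or> lt K y x)
      \<and> (lt K x y \<longrightarrow> lt K (pl K x z) (pl K y z))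
      \<and> (lt K (zer K) z \<and> lt K x y \<longrightarrow> lt K (tm K x z) (tm K y z))
      \<and> (lt K x y \<longrightarrow> (\<exists>w\<in>dom K. pl K x w = y))
      \<and> lt K (zer K) (one K)
      \<and> (lt K (zer K) x \<longrightarrow> one K = x \<or> lt K (one K) x)
      \<and> (zer K = x \<or> lt K (zer K) x)"
    using PA unfolding PAminus_def by (elim conjE)
  then show ?thesis using assms by (elim ballE) auto
qed

lemma ax: assumes "x \<in> D" "y \<in> D" "z \<in> D" shows
  "x \<oplus> y = y \<oplus> x"
  "x \<oplus> y \<oplus> z = x \<oplus> (y \<oplus> z)"
  "x \<otimes> y = y \<otimes> x"
  "x \<otimes> y \<otimes> z = x \<otimes> (y \<otimes> z)"
  "x \<otimes> (y \<oplus> z) = x \<otimes> y \<oplus> x \<otimes> z"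
  "x \<oplus> \<zero> = x"
  "x \<otimes> \<zero> = \<zero>"
  "x \<otimes> \<one> = x"
  "\<not> x \<prec> x"
  "x \<prec> y \<Longrightarrow> y \<prec> z \<Longrightarrow> x \<prec> z"
  "x \<prec> y \<or> x = y \<or> y \<prec> x"
  "x \<prec> y \<Longrightarrow> x \<oplus> z \<prec> y \<oplus> z"
  "\<zero> \<prec> z \<Longrightarrow> x \<prec> y \<Longrightarrow> x \<otimes> z \<prec> y \<otimes> z"
  "x \<prec> y \<Longrightarrow> \<exists>w\<in>D. x \<oplus> w = y"
  "\<zero> \<prec> \<one>"
  "\<zero> \<prec> x \<Longrightarrow> \<one> = x \<or> \<one> \<prec> x"
  "\<zero> = x \<or> \<zero> \<prec> x"
  using ax0[OF assms] by (elim conjE, blast)+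

lemma add_comm: "x \<in> D \<Longrightarrow> y \<in> D \<Longrightarrow> x \<oplus> y = y \<oplus> x" using ax(1)[of x y x] by blast
lemma add_assoc: "x \<in> D \<Longrightarrow> y \<in> D \<Longrightarrow> z \<in> D \<Longrightarrow> x \<oplus> y \<oplus> z = x \<oplus> (y \<oplus> z)" using ax(2)[of x y z] by blast
lemma add_lcomm: "x \<in> D \<Longrightarrow> y \<in> D \<Longrightarrow> z \<in> D \<Longrightarrow> x \<oplus> (y \<oplus> z) = y \<oplus> (x \<oplus> z)"
  by (metis add_assoc add_comm)
lemma mul_comm: "x \<in> D \<Longrightarrow> y \<in> D \<Longrightarrow> x \<otimes> y = y \<otimes> x" using ax(3)[of x y x] by blast
lemma mul_assoc: "x \<in> D \<Longrightarrow> y \<in> D \<Longrightarrow> z \<in> D \<Longrightarrow> x \<otimes> y \<otimes> z = x \<otimes> (y \<otimes> z)" using ax(4)[of x y z] by blast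
lemma mul_lcomm: "x \<in> D \<Longrightarrow> y \<in> D \<Longrightarrow> z \<in> D \<Longrightarrow> x \<otimes> (y \<otimes> z) = y \<otimes> (x \<otimes> z)"
  by (metis mul_assoc mul_comm)
lemma distL: "x \<in> D \<Longrightarrow> y \<in> D \<Longrightarrow> z \<in> D \<Longrightarrow> x \<otimes> (y \<oplus> z) = x \<otimes> y \<oplus> x \<otimes> z" using ax(5)[of x y z] by blast
lemma distR: "x \<in> D \<Longrightarrow> y \<in> D \<Longrightarrow> z \<in> D \<Longrightarrow> (y \<oplus> z) \<otimes> x = y \<otimes> x \<oplus> z \<otimes> x"
  by (metis distL mul_comm addD)
lemma add0[simp]: "x \<in> D \<Longrightarrow> x \<oplus> \<zero> = x" using ax(6)[of x x x] by blast
lemma add0l[simp]: "x \<in> D \<Longrightarrow> \<zero> \<oplus> x = x" using add0 add_comm by (metis zD)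
lemma mul0[simp]: "x \<in> D \<Longrightarrow> x \<otimes> \<zero> = \<zero>" using ax(7)[of x x x] by blast
lemma mul0l[simp]: "x \<in> D \<Longrightarrow> \<zero> \<otimes> x = \<zero>" by (metis mul0 mul_comm zD)
lemma mul1[simp]: "x \<in> D \<Longrightarrow> x \<otimes> \<one> = x" using ax(8)[of x x x] by blast
lemma mul1l[simp]: "x \<in> D \<Longrightarrow> \<one> \<otimes> x = x" by (metis mul1 mul_comm oD)

lemmas ac = add_assoc add_comm add_lcomm mul_assoc mul_comm mul_lcomm distL distR

lemma irrefl[simp]: "x \<in> D \<Longrightarrow> \<not> x \<prec> x" using ax(9)[of x x x] by blast
lemma trans: "x \<in> D \<Longrightarrow> y \<in> D \<Longrightarrow> z \<in> D \<Longrightarrow> x \<prec> y \<Longrightarrow> y \<prec> z \<Longrightarrow> x \<prec> z" using ax(10)[of x y z] by blast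
lemma trich: "x \<in> D \<Longrightarrow> y \<in> D \<Longrightarrow> x \<prec> y \<or> x = y \<or> y \<prec> x" using ax(11)[of x y x] by blast
lemma asym: "x \<in> D \<Longrightarrow> y \<in> D \<Longrightarrow> x \<prec> y \<Longrightarrow> \<not> y \<prec> x" using trans irrefl by blast
lemma not_less: "x \<in> D \<Longrightarrow> y \<in> D \<Longrightarrow> (\<not> x \<prec> y) = (y \<preceq> x)" using trich asym irrefl by blast
lemma le_trans: "x \<in> D \<Longrightarrow> y \<in> D \<Longrightarrow> z \<in> D \<Longrightarrow> x \<preceq> y \<Longrightarrow> y \<preceq> z \<Longrightarrow> x \<preceq> z" using trans by blast
lemma less_le_trans: "x \<in> D \<Longrightarrow> y \<in> D \<Longrightarrow> z \<in> D \<Longrightarrow> x \<prec> y \<Longrightarrow> y \<preceq> z \<Longrightarrow> x \<prec> z" using trans by blast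
lemma le_less_trans: "x \<in> D \<Longrightarrow> y \<in> D \<Longrightarrow> z \<in> D \<Longrightarrow> x \<preceq> y \<Longrightarrow> y \<prec> z \<Longrightarrow> x \<prec> z" using trans by blast
lemma zero_le: "x \<in> D \<Longrightarrow> \<zero> \<preceq> x" using ax(17)[of x x x] by blast
lemma not_less0[simp]: "x \<in> D \<Longrightarrow> \<not> x \<prec> \<zero>" using zero_le asym by (metis irrefl zD)
lemma zero_less_one[simp]: "\<zero> \<prec> \<one>" using ax(15)[of "\<zero>" "\<zero>" "\<zero>"] by simp

lemma add_less_mono_r: "x \<in> D \<Longrightarrow> y \<in> D \<Longrightarrow> z \<in> D \<Longrightarrow> x \<prec> y \<Longrightarrow> x \<oplus> z \<prec> y \<oplus> z" using ax(12)[of x y z] by blast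
lemma add_less_mono_l: "x \<in> D \<Longrightarrow> y \<in> D \<Longrightarrow> z \<in> D \<Longrightarrow> x \<prec> y \<Longrightarrow> z \<oplus> x \<prec> z \<oplus> y"
  by (metis add_less_mono_r add_comm)
lemma add_cancel_r: "x \<in> D \<Longrightarrow> y \<in> D \<Longrightarrow> z \<in> D \<Longrightarrow> x \<oplus> z = y \<oplus> z \<Longrightarrow> x = y"
  by (metis add_less_mono_r trich irrefl addD)
lemma add_cancel_l: "x \<in> D \<Longrightarrow> y \<in> D \<Longrightarrow> z \<in> D \<Longrightarrow> z \<oplus> x = z \<oplus> y \<Longrightarrow> x = y"
  by (metis add_cancel_r add_comm)
lemma add_less_cancel_r: "x \<in> D \<Longrightarrow> y \<in> D \<Longrightarrow> z \<in> D \<Longrightarrow> (x \<oplus> z \<prec> y \<oplus> z) = (x \<prec> y)"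
  by (metis add_less_mono_r trich asym irrefl addD)
lemma add_less_cancel_l: "x \<in> D \<Longrightarrow> y \<in> D \<Longrightarrow> z \<in> D \<Longrightarrow> (z \<oplus> x \<prec> z \<oplus> y) = (x \<prec> y)"
  by (metis add_less_cancel_r add_comm)
lemma add_le_cancel_l: "x \<in> D \<Longrightarrow> y \<in> D \<Longrightarrow> z \<in> D \<Longrightarrow> (z \<oplus> x \<preceq> z \<oplus> y) = (x \<preceq> y)"
  by (metis add_less_cancel_l add_cancel_l)
lemma add_le_cancel_r: "x \<in> D \<Longrightarrow> y \<in> D \<Longrightarrow> z \<in> D \<Longrightarrow> (x \<oplus> z \<preceq> y \<oplus> z) = (x \<preceq> y)"
  by (metis add_less_cancel_r add_cancel_r)
lemma le_add: "x \<in> D \<Longrightarrow> y \<in> D \<Longrightarrow> x \<preceq> x \<oplus> y"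
  by (metis add0 add_le_cancel_l zero_le zD)
lemma le_add2: "x \<in> D \<Longrightarrow> y \<in> D \<Longrightarrow> x \<preceq> y \<oplus> x"
  by (metis le_add add_comm)
lemma less_add: "x \<in> D \<Longrightarrow> y \<in> D \<Longrightarrow> \<zero> \<prec> y \<Longrightarrow> x \<prec> x \<oplus> y"
  by (metis add0 add_less_cancel_l zD)
lemma less_add1[simp]: "x \<in> D \<Longrightarrow> x \<prec> x \<oplus> \<one>" by (simp add: less_add)
lemma add_le_mono: "x \<in> D \<Longrightarrow> y \<in> D \<Longrightarrow> u \<in> D \<Longrightarrow> v \<in> D \<Longrightarrow> x \<preceq> y \<Longrightarrow> u \<preceq> v \<Longrightarrow> x \<oplus> u \<preceq> y \<oplus> v"
proof -
  assume a: "x \<in> D" "y \<in> D" "u \<in> D" "v \<in> D" "x \<preceq> y" "u \<preceq> v"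
  have 1: "x \<oplus> u \<preceq> y \<oplus> u" using add_le_cancel_r[of x y u] a by simp
  have 2: "y \<oplus> u \<preceq> y \<oplus> v" using add_le_cancel_l[of u v y] a by simp
  show ?thesis using le_trans[OF _ _ _ 1 2] a by simp
qed
lemma add_less_le_mono: "x \<in> D \<Longrightarrow> y \<in> D \<Longrightarrow> u \<in> D \<Longrightarrow> v \<in> D \<Longrightarrow> x \<prec> y \<Longrightarrow> u \<preceq> v \<Longrightarrow> x \<oplus> u \<prec> y \<oplus> v"
proof -
  assume a: "x \<in> D" "y \<in> D" "u \<in> D" "v \<in> D" "x \<prec> y" "u \<preceq> v"
  have 1: "x \<oplus> u \<prec> y \<oplus> u" using add_less_cancel_r[of x y u] a by simp
  have 2: "y \<oplus> u \<preceq> y \<oplus> v" using add_le_cancel_l[of u v y] a by simp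
  show ?thesis using less_le_trans[OF _ _ _ 1 2] a by simp
qed

lemma less_ex: "x \<in> D \<Longrightarrow> y \<in> D \<Longrightarrow> x \<prec> y \<Longrightarrow> \<exists>w\<in>D. x \<oplus> w = y" using ax(14)[of x y x] by blast
lemma le_ex: "x \<in> D \<Longrightarrow> y \<in> D \<Longrightarrow> x \<preceq> y \<Longrightarrow> \<exists>w\<in>D. x \<oplus> w = y" using less_ex add0 zD by blast
lemma pos_ge1: "x \<in> D \<Longrightarrow> \<zero> \<prec> x \<Longrightarrow> \<one> \<preceq> x" using ax(16)[of x x x] by blast
lemma nonzero_pos: "x \<in> D \<Longrightarrow> x \<noteq> \<zero> \<Longrightarrow> \<zero> \<prec> x" using ax(17)[of x x x] by blast
lemma less_succ_le: "x \<in> D \<Longrightarrow> y \<in> D \<Longrightarrow> x \<prec> y \<Longrightarrow> x \<oplus> \<one> \<preceq> y"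
proof -
  assume xy: "x \<in> D" "y \<in> D" "x \<prec> y"
  then obtain w where w: "w \<in> D" "x \<oplus> w = y" using less_ex by blast
  then have "w \<noteq> \<zero>" using xy by auto
  then have "\<one> \<preceq> w" using pos_ge1 nonzero_pos w by blast
  then show ?thesis using add_le_cancel_l[of "\<one>" w x] w xy by auto
qed
lemma less_Suc: "x \<in> D \<Longrightarrow> y \<in> D \<Longrightarrow> (x \<prec> y \<oplus> \<one>) = (x \<preceq> y)"
  by (metis less_succ_le not_less addD oD less_add1 le_less_trans asym)
lemma le_less_Suc: "x \<in> D \<Longrightarrow> y \<in> D \<Longrightarrow> x \<preceq> y \<Longrightarrow> x \<prec> y \<oplus> \<one>"
  using less_Suc by blast
lemma pred_ex: "x \<in> D \<Longrightarrow> x \<noteq> \<zero> \<Longrightarrow> \<exists>y\<in>D. x = y \<oplus> \<one>"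
  by (metis less_ex nonzero_pos pos_ge1 add0l add_comm zD oD)

lemma mul_less_mono_r: "x \<in> D \<Longrightarrow> y \<in> D \<Longrightarrow> z \<in> D \<Longrightarrow> \<zero> \<prec> z \<Longrightarrow> x \<prec> y \<Longrightarrow> x \<otimes> z \<prec> y \<otimes> z" using ax(13)[of x y z] by blast
lemma mul_le_mono_r: "x \<in> D \<Longrightarrow> y \<in> D \<Longrightarrow> z \<in> D \<Longrightarrow> x \<preceq> y \<Longrightarrow> x \<otimes> z \<preceq> y \<otimes> z"
  by (metis mul_less_mono_r nonzero_pos mul0)
lemma mul_less_cancel_r: "x \<in> D \<Longrightarrow> y \<in> D \<Longrightarrow> z \<in> D \<Longrightarrow> x \<otimes> z \<prec> y \<otimes> z \<Longrightarrow> x \<prec> y"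
  by (metis mul_le_mono_r not_less mulD)
lemma le_mul: "x \<in> D \<Longrightarrow> p \<in> D \<Longrightarrow> \<one> \<preceq> p \<Longrightarrow> x \<preceq> x \<otimes> p"
  by (metis mul1 mul_comm mul_le_mono_r oD)

lemma max_ex: "x \<in> D \<Longrightarrow> y \<in> D \<Longrightarrow> \<exists>m\<in>D. x \<preceq> m \<and> y \<preceq> m"
  using trich by blast

lemma div_unique:
  assumes "q \<in> D" "r \<in> D" "q' \<in> D" "r' \<in> D" "p \<in> D" "r \<prec> p" "r' \<prec> p" "q \<otimes> p \<oplus> r = q' \<otimes> p \<oplus> r'"
  shows "q = q' \<and> r = r'"
proof -
  have *: "False" if "a \<in> D" "b \<in> D" "s \<in> D" "t \<in> D" "s \<prec> p" "t \<prec> p" "a \<prec> b" "a \<otimes> p \<oplus> s = b \<otimes> p \<oplus> t" for a b s t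
  proof -
    have "a \<oplus> \<one> \<preceq> b" using less_succ_le that by blast
    then have "(a \<oplus> \<one>) \<otimes> p \<preceq> b \<otimes> p" using mul_le_mono_r that assms by simp
    then have A: "a \<otimes> p \<oplus> p \<preceq> b \<otimes> p" using distR that assms by simp
    have B: "b \<otimes> p \<preceq> b \<otimes> p \<oplus> t" using le_add that assms by simp
    have C: "a \<otimes> p \<oplus> s \<prec> a \<otimes> p \<oplus> p" using add_less_cancel_l[of s p "a \<otimes> p"] that(1,3,5) assms(5) by simp
    have X: "a \<otimes> p \<oplus> s \<prec> b \<otimes> p" by (rule less_le_trans[OF _ _ _ C A]) (use that assms in simp_all)
    have Y: "a \<otimes> p \<oplus> s \<prec> b \<otimes> p \<oplus> t" by (rule less_le_trans[OF _ _ _ X B]) (use that assms in simp_all)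
    then have "b \<otimes> p \<oplus> t \<prec> b \<otimes> p \<oplus> t" unfolding that(8) .
    then show False using that assms irrefl by simp
  qed
  have "q = q'" using *[of q q' r r'] *[of q' q r' r] assms trich by metis
  then show ?thesis using assms add_cancel_l by (metis mulD)
qed

definition even where "even x \<longleftrightarrow> (\<exists>s\<in>D. x = s \<oplus> s)"
definition odd where "odd x \<longleftrightarrow> (\<exists>s\<in>D. x = s \<oplus> s \<oplus> \<one>)"

lemma not_even_odd: "x \<in> D \<Longrightarrow> even x \<Longrightarrow> odd x \<Longrightarrow> False"
proof -
  assume x: "x \<in> D" "even x" "odd x"
  then obtain s t where st: "s \<in> D" "t \<in> D" "s \<oplus> s = t \<oplus> t \<oplus> \<one>" unfolding even_def odd_def by metis
  show False
  proof (cases "s \<preceq> t")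
    case True
    then have "s \<oplus> s \<preceq> t \<oplus> t" using add_le_mono st by blast
    then show False using st by (metis addD oD less_add1 le_less_trans irrefl)
  next
    case False
    then have "t \<prec> s" using not_less st by blast
    then have "t \<oplus> \<one> \<preceq> s" using less_succ_le st by blast
    then have "t \<oplus> \<one> \<oplus> (t \<oplus> \<one>) \<preceq> s \<oplus> s" using add_le_mono[of "t \<oplus> \<one>" s "t \<oplus> \<one>" s] st(1,2) by simp
    moreover have "t \<oplus> t \<oplus> \<one> \<prec> t \<oplus> \<one> \<oplus> (t \<oplus> \<one>)" using st
      by (metis add_assoc add_lcomm less_add1 addD oD)
    ultimately show False using st by (metis addD oD less_le_trans irrefl)
  qed
qed

lemma even_add: "x \<in> D \<Longrightarrow> y \<in> D \<Longrightarrow> even x \<Longrightarrow> even y \<Longrightarrow> even (x \<oplus> y)"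
  unfolding even_def by (metis add_assoc add_lcomm addD)
lemma odd_add_even: "x \<in> D \<Longrightarrow> y \<in> D \<Longrightarrow> odd x \<Longrightarrow> even y \<Longrightarrow> odd (x \<oplus> y)"
  unfolding even_def odd_def by (smt (verit) add_assoc add_comm add_lcomm addD oD)
lemma even_mul: "x \<in> D \<Longrightarrow> y \<in> D \<Longrightarrow> even y \<Longrightarrow> even (x \<otimes> y)"
  unfolding even_def by (metis distL mulD)
lemma even_Suc: "x \<in> D \<Longrightarrow> even x \<Longrightarrow> odd (x \<oplus> \<one>)"
  unfolding even_def odd_def by blast
lemma odd_Suc: "x \<in> D \<Longrightarrow> odd x \<Longrightarrow> even (x \<oplus> \<one>)"
  unfolding even_def odd_def by (metis add_assoc add_lcomm addD oD)
lemma even_less: "x \<in> D \<Longrightarrow> y \<in> D \<Longrightarrow> even x \<Longrightarrow> even y \<Longrightarrow> x \<prec> y \<Longrightarrow> x \<oplus> \<one> \<prec> y"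
  by (metis less_succ_le even_Suc not_even_odd addD oD)

end



context pam begin

lemma bound3: "a \<in> D \<Longrightarrow> b \<in> D \<Longrightarrow> c \<in> D \<Longrightarrow> a \<prec> a \<oplus> b \<oplus> c \<oplus> \<one> \<and> b \<prec> a \<oplus> b \<oplus> c \<oplus> \<one> \<and> c \<prec> a \<oplus> b \<oplus> c \<oplus> \<one>"
proof -
  assume D: "a \<in> D" "b \<in> D" "c \<in> D"
  have 1: "a \<oplus> b \<oplus> c \<prec> a \<oplus> b \<oplus> c \<oplus> \<one>" using D by simp
  have 2: "a \<oplus> b \<prec> a \<oplus> b \<oplus> c \<oplus> \<one>" by (rule le_less_trans[OF _ _ _ le_add 1]) (use D in simp_all)
  have 3: "c \<prec> a \<oplus> b \<oplus> c \<oplus> \<one>" by (rule le_less_trans[OF _ _ _ le_add2 1]) (use D in simp_all)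
  have 4: "a \<prec> a \<oplus> b \<oplus> c \<oplus> \<one>" by (rule le_less_trans[OF _ _ _ le_add 2]) (use D in simp_all)
  have 5: "b \<prec> a \<oplus> b \<oplus> c \<oplus> \<one>" by (rule le_less_trans[OF _ _ _ le_add2 2]) (use D in simp_all)
  show ?thesis using 3 4 5 by blast
qed

end

locale pa0 = pam +
  fixes eps :: fm and vx vy :: nat
  assumes ind0: "delta0 f \<Longrightarrow> ind K f x"
    and expok: "exp_ok K eps vx vy"
begin

abbreviation E where "E a b \<equiv> Egraph K eps vx vy a b"

lemma ind_pred:
  assumes "Cl K b 0 P" "env_in K e" "\<And>a. a \<in> D \<Longrightarrow> P (e(x:=a)) = Q a"
    "Q \<zero>" "\<And>a. a \<in> D \<Longrightarrow> Q a \<Longrightarrow> Q (a \<oplus> \<one>)" "a \<in> D"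
  shows "Q a"
proof -
  obtain f where f: "delta0 f" "\<forall>e. env_in K e \<longrightarrow> P e = sat K e f" using assms(1) unfolding Cl_def by auto
  have ee: "\<And>a. a \<in> D \<Longrightarrow> env_in K (e(x:=a))" by (rule env_in_upd[OF assms(2)])
  have sq: "\<And>a. a \<in> D \<Longrightarrow> sat K (e(x:=a)) f = Q a" using f(2) assms(3) ee by simp
  note i = ind0[OF f(1), of x, unfolded ind_def, rule_format, OF assms(2)]
  have base: "sat K (e(x:=\<zero>)) f" using sq[of "\<zero>"] assms(4) by simp
  have step: "\<forall>a\<in>D. sat K (e(x:=a)) f \<longrightarrow> sat K (e(x:=a \<oplus> \<one>)) f"
  proof (intro ballI impI)
    fix a assume a: "a \<in> D" "sat K (e(x:=a)) f"
    then have "Q a" using sq by simp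
    then have "Q (a \<oplus> \<one>)" using assms(5) a by simp
    then show "sat K (e(x:=a \<oplus> \<one>)) f" using sq[of "a \<oplus> \<one>"] a by simp
  qed
  have "sat K (e(x:=a)) f" by (rule i) (use base step assms(6) in blast)+
  then show ?thesis using sq assms(6) by simp
qed

definition Ef :: "nat \<Rightarrow> nat \<Rightarrow> fm" where "Ef i j = ren (sw (sw vx i vy) j \<circ> sw vx i) eps"

lemma exp_facts: "delta0 eps" "vx \<noteq> vy" "fv eps \<subseteq> {vx, vy}"
  "\<And>b. b \<in> D \<Longrightarrow> E \<zero> b = (b = \<one>)"
  "\<And>a c. a \<in> D \<Longrightarrow> c \<in> D \<Longrightarrow> E (a \<oplus> \<one>) c = (\<exists>b\<in>D. E a b \<and> c = b \<oplus> b)"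
  "\<And>a. a \<in> D \<Longrightarrow> \<exists>b\<in>D. E a b"
  using expok unfolding exp_ok_def by blast+

lemma Ef_delta0[simp]: "delta0 (Ef i j)" unfolding Ef_def using exp_facts(1) by (simp add: delta0_ren)

lemma sat_Ef[simp]: "i \<noteq> j \<Longrightarrow> sat K e (Ef i j) = E (e i) (e j)"
proof -
  assume ij: "i \<noteq> j"
  let ?s = "sw (sw vx i vy) j \<circ> sw vx i"
  have inj: "inj ?s" using sw_inj inj_compose by blast
  have s1: "?s vx = i" and s2: "?s vy = j" unfolding sw_def using exp_facts(2) ij by auto
  have "sat K e (Ef i j) = sat K (e \<circ> ?s) eps" unfolding Ef_def by (rule sat_ren[OF inj])
  also have "\<dots> = sat K ((\<lambda>_. zer K)(vx := e i, vy := e j)) eps"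
    by (rule sat_coinc) (use exp_facts(2,3) s1 s2 in auto)
  finally show ?thesis unfolding Egraph_def .
qed

lemma E0: "b \<in> D \<Longrightarrow> E \<zero> b = (b = \<one>)" using exp_facts(4) by blast
lemma ES: "a \<in> D \<Longrightarrow> c \<in> D \<Longrightarrow> E (a \<oplus> \<one>) c = (\<exists>b\<in>D. E a b \<and> c = b \<oplus> b)" using exp_facts(5) by blast
lemma Etot: "a \<in> D \<Longrightarrow> \<exists>b\<in>D. E a b" using exp_facts(6) by blast

lemma E_unique:
  assumes D: "x \<in> D" "p \<in> D" "p' \<in> D" and E: "E x p" "E x p'"
  shows "p = p'"
proof -
  define B where "B = p \<oplus> p' \<oplus> \<one> \<oplus> \<one>"
  have B: "B \<in> D" "p \<prec> B" "p' \<prec> B" using bound3[of p p' "\<one>"] D unfolding B_def by auto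
  let ?Q = "\<lambda>a. \<forall>u\<in>D. u \<prec> B \<longrightarrow> (\<forall>v\<in>D. v \<prec> B \<longrightarrow> E a u \<and> E a v \<longrightarrow> u = v)"
  have "?Q x"
  proof (rule ind_pred[where P="\<lambda>e. sat K e (BAll 2 (Var 1) (BAll 3 (Var 1) (Imp (Conj (Ef 0 2) (Ef 0 3)) (Eq (Var 2) (Var 3)))))"
        and e="(\<lambda>_. \<zero>)(1 := B)" and x=0 and b=True and Q="?Q"])
    show "Cl K True 0 (\<lambda>e. sat K e (BAll 2 (Var 1) (BAll 3 (Var 1) (Imp (Conj (Ef 0 2) (Ef 0 3)) (Eq (Var 2) (Var 3))))))"
      by (rule Cl_d0) simp
    show "env_in K ((\<lambda>_. \<zero>)(1 := B))" using B unfolding env_in_def by auto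
  next
    fix a assume "a \<in> D"
    show "sat K (((\<lambda>_. \<zero>)(1 := B))(0 := a)) (BAll 2 (Var 1) (BAll 3 (Var 1) (Imp (Conj (Ef 0 2) (Ef 0 3)) (Eq (Var 2) (Var 3))))) = ?Q a"
      by simp
  next
    show "?Q \<zero>" using E0 by auto
  next
    fix a assume a: "a \<in> D" and Qa: "?Q a"
    show "?Q (a \<oplus> \<one>)"
    proof (intro ballI impI)
      fix u v assume u: "u \<in> D" "u \<prec> B" and v: "v \<in> D" "v \<prec> B" and Euv: "E (a \<oplus> \<one>) u \<and> E (a \<oplus> \<one>) v"
      obtain b where b: "b \<in> D" "E a b" "u = b \<oplus> b" using ES[OF a u(1)] Euv by blast
      obtain b' where b': "b' \<in> D" "E a b'" "v = b' \<oplus> b'" using ES[OF a v(1)] Euv by blast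
      have "b \<prec> B" by (rule le_less_trans[OF _ _ _ le_add[of b b]]) (use b u B in simp_all)
      moreover have "b' \<prec> B" by (rule le_less_trans[OF _ _ _ le_add[of b' b']]) (use b' v B in simp_all)
      ultimately have "b = b'" using Qa b b' by blast
      then show "u = v" using b b' by simp
    qed
  qed (use D in auto)
  then show ?thesis using D B E by blast
qed

end



context pa0 begin

lemma E_pos:
  assumes D: "x \<in> D" "p \<in> D" and E: "E x p"
  shows "\<zero> \<prec> p"
proof -
  define B where "B = p \<oplus> \<one>"
  have B: "B \<in> D" "p \<prec> B" using D unfolding B_def by auto
  let ?Q = "\<lambda>a. \<forall>u\<in>D. u \<prec> B \<longrightarrow> E a u \<longrightarrow> \<zero> \<prec> u"
  have "?Q x"
  proof (rule ind_pred[where P="\<lambda>e. sat K e (BAll 2 (Var 1) (Imp (Ef 0 2) (Lt Zero (Var 2))))"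
        and e="(\<lambda>_. \<zero>)(1 := B)" and x=0 and b=True and Q="?Q"])
    show "Cl K True 0 (\<lambda>e. sat K e (BAll 2 (Var 1) (Imp (Ef 0 2) (Lt Zero (Var 2)))))"
      by (rule Cl_d0) simp
    show "env_in K ((\<lambda>_. \<zero>)(1 := B))" using B unfolding env_in_def by auto
  next
    fix a assume "a \<in> D"
    show "sat K (((\<lambda>_. \<zero>)(1 := B))(0 := a)) (BAll 2 (Var 1) (Imp (Ef 0 2) (Lt Zero (Var 2)))) = ?Q a"
      by simp
  next
    show "?Q \<zero>" using E0 by auto
  next
    fix a assume a: "a \<in> D" and Qa: "?Q a"
    show "?Q (a \<oplus> \<one>)"
    proof (intro ballI impI)
      fix u assume u: "u \<in> D" "u \<prec> B" "E (a \<oplus> \<one>) u"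
      obtain b where b: "b \<in> D" "E a b" "u = b \<oplus> b" using ES[OF a u(1)] u by blast
      have "b \<prec> B" by (rule le_less_trans[OF _ _ _ le_add[of b b]]) (use b u B in simp_all)
      then have "\<zero> \<prec> b" using Qa b by blast
      then show "\<zero> \<prec> u" using b le_add[of b b] by (metis less_le_trans zD addD)
    qed
  qed (use D in auto)
  then show ?thesis using D B E by blast
qed

lemma E_ge1: "x \<in> D \<Longrightarrow> p \<in> D \<Longrightarrow> E x p \<Longrightarrow> \<one> \<preceq> p"
  using E_pos pos_ge1 by blast

lemma div_ex:
  assumes D: "c \<in> D" "p \<in> D" and p: "\<zero> \<prec> p"
  shows "\<exists>q\<in>D. \<exists>r\<in>D. c = q \<otimes> p \<oplus> r \<and> r \<prec> p"
proof -
  let ?Q = "\<lambda>c. \<exists>q\<in>D. q \<prec> c \<oplus> \<one> \<and> (\<exists>r\<in>D. r \<prec> p \<and> c = q \<otimes> p \<oplus> r)"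
  have "?Q c"
  proof (rule ind_pred[where P="\<lambda>e. sat K e (BEx 2 (Plus (Var 0) One) (BEx 3 (Var 1) (Eq (Var 0) (Plus (Times (Var 2) (Var 1)) (Var 3)))))"
        and e="(\<lambda>_. \<zero>)(1 := p)" and x=0 and b=True and Q="?Q"])
    show "Cl K True 0 (\<lambda>e. sat K e (BEx 2 (Plus (Var 0) One) (BEx 3 (Var 1) (Eq (Var 0) (Plus (Times (Var 2) (Var 1)) (Var 3))))))"
      by (rule Cl_d0) simp
    show "env_in K ((\<lambda>_. \<zero>)(1 := p))" using D unfolding env_in_def by auto
  next
    fix a assume "a \<in> D"
    show "sat K (((\<lambda>_. \<zero>)(1 := p))(0 := a)) (BEx 2 (Plus (Var 0) One) (BEx 3 (Var 1) (Eq (Var 0) (Plus (Times (Var 2) (Var 1)) (Var 3))))) = ?Q a"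
      by auto
  next
    show "?Q \<zero>" using p D by (intro bexI[of _ "\<zero>"]) auto
  next
    fix a assume a: "a \<in> D" and Qa: "?Q a"
    then obtain q r where qr: "q \<in> D" "r \<in> D" "q \<prec> a \<oplus> \<one>" "r \<prec> p" "a = q \<otimes> p \<oplus> r" by blast
    have qa: "q \<prec> a \<oplus> \<one> \<oplus> \<one>" using qr a by (meson addD oD less_add1 trans)
    have "r \<oplus> \<one> \<preceq> p" using less_succ_le qr D by blast
    then show "?Q (a \<oplus> \<one>)"
    proof
      assume "r \<oplus> \<one> \<prec> p"
      moreover have "a \<oplus> \<one> = q \<otimes> p \<oplus> (r \<oplus> \<one>)" using qr D by (simp add: add_assoc)
      ultimately show ?thesis using qa qr by (intro bexI[of _ q]) auto
    next
      assume rp: "r \<oplus> \<one> = p"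
      have "a \<oplus> \<one> = (q \<oplus> \<one>) \<otimes> p \<oplus> \<zero>" using qr D rp by (simp add: add_assoc distR)
      moreover have "q \<oplus> \<one> \<prec> a \<oplus> \<one> \<oplus> \<one>" using qr a add_less_cancel_r by simp
      ultimately show ?thesis using qr p by (intro bexI[of _ "q \<oplus> \<one>"]) auto
    qed
  qed (use D in auto)
  then show ?thesis by blast
qed

lemma par_ex:
  assumes D: "x \<in> D"
  shows "even x \<or> odd x"
proof -
  let ?Q = "\<lambda>x. \<exists>s\<in>D. s \<prec> x \<oplus> \<one> \<and> (x = s \<oplus> s \<or> x = s \<oplus> s \<oplus> \<one>)"
  have "?Q x"
  proof (rule ind_pred[where P="\<lambda>e. sat K e (BEx 1 (Plus (Var 0) One) (Disj (Eq (Var 0) (Plus (Var 1) (Var 1))) (Eq (Var 0) (Plus (Plus (Var 1) (Var 1)) One))))"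
        and e="\<lambda>_. \<zero>" and x=0 and b=True and Q="?Q"])
    show "Cl K True 0 (\<lambda>e. sat K e (BEx 1 (Plus (Var 0) One) (Disj (Eq (Var 0) (Plus (Var 1) (Var 1))) (Eq (Var 0) (Plus (Plus (Var 1) (Var 1)) One)))))"
      by (rule Cl_d0) simp
    show "env_in K (\<lambda>_. \<zero>)" unfolding env_in_def by auto
  next
    fix a assume "a \<in> D"
    show "sat K ((\<lambda>_. \<zero>)(0 := a)) (BEx 1 (Plus (Var 0) One) (Disj (Eq (Var 0) (Plus (Var 1) (Var 1))) (Eq (Var 0) (Plus (Plus (Var 1) (Var 1)) One)))) = ?Q a"
      by auto
  next
    show "?Q \<zero>" by (intro bexI[of _ "\<zero>"]) auto
  next
    fix a assume a: "a \<in> D" and Qa: "?Q a"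
    then obtain s where s: "s \<in> D" "s \<prec> a \<oplus> \<one>" "a = s \<oplus> s \<or> a = s \<oplus> s \<oplus> \<one>" by blast
    have sa: "s \<prec> a \<oplus> \<one> \<oplus> \<one>" using s a by (meson addD oD less_add1 trans)
    show "?Q (a \<oplus> \<one>)"
    proof (cases "a = s \<oplus> s")
      case True
      then show ?thesis using s sa by (intro bexI[of _ s]) auto
    next
      case False
      then have "a = s \<oplus> s \<oplus> \<one>" using s by blast
      then have "a \<oplus> \<one> = (s \<oplus> \<one>) \<oplus> (s \<oplus> \<one>)" using s by (simp add: ac)
      moreover have "s \<oplus> \<one> \<prec> a \<oplus> \<one> \<oplus> \<one>" using s a add_less_cancel_r by simp
      ultimately show ?thesis using s by (intro bexI[of _ "s \<oplus> \<one>"]) auto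
    qed
  qed (use D in auto)
  then show ?thesis unfolding even_def odd_def by blast
qed

lemma E_mul:
  assumes D: "x \<in> D" "y \<in> D" "p \<in> D" "q \<in> D" "r \<in> D" and E: "E x p" "E y q" "E (x \<oplus> y) r"
  shows "r = p \<otimes> q"
proof -
  define B where "B = q \<oplus> r \<oplus> (x \<oplus> y) \<oplus> \<one>"
  have B: "B \<in> D" "q \<prec> B" "r \<prec> B" "x \<oplus> y \<prec> B" using bound3[of q r "x \<oplus> y"] D unfolding B_def by auto
  let ?Q = "\<lambda>a. \<forall>u\<in>D. u \<prec> B \<longrightarrow> (\<forall>v\<in>D. v \<prec> B \<longrightarrow> (\<forall>s\<in>D. s \<prec> B \<longrightarrow> s = x \<oplus> a \<longrightarrow> E a u \<longrightarrow> E s v \<longrightarrow> v = p \<otimes> u))"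
  let ?F = "BAll 2 (Var 1) (BAll 3 (Var 1) (BAll 6 (Var 1) (Imp (Eq (Var 6) (Plus (Var 4) (Var 0))) (Imp (Ef 0 2) (Imp (Ef 6 3) (Eq (Var 3) (Times (Var 5) (Var 2))))))))"
  have "?Q y"
  proof (rule ind_pred[where P="\<lambda>e. sat K e ?F" and e="(\<lambda>_. \<zero>)(1 := B, 4 := x, 5 := p)" and x=0 and b=True and Q="?Q"])
    show "Cl K True 0 (\<lambda>e. sat K e ?F)" by (rule Cl_d0) simp
    show "env_in K ((\<lambda>_. \<zero>)(1 := B, 4 := x, 5 := p))" using B D unfolding env_in_def by auto
  next
    fix a assume "a \<in> D"
    show "sat K (((\<lambda>_. \<zero>)(1 := B, 4 := x, 5 := p))(0 := a)) ?F = ?Q a" by simp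
  next
    show "?Q \<zero>"
    proof (intro ballI impI)
      fix u v s assume u: "u \<in> D" "u \<prec> B" and v: "v \<in> D" "v \<prec> B" and s: "s \<in> D" "s \<prec> B" "s = x \<oplus> \<zero>" "E \<zero> u" "E s v"
      have "u = \<one>" using E0 u s by blast
      moreover have "v = p" using E_unique[of x v p] s v D E by simp
      ultimately show "v = p \<otimes> u" using D by simp
    qed
  next
    fix a assume a: "a \<in> D" and Qa: "?Q a"
    show "?Q (a \<oplus> \<one>)"
    proof (intro ballI impI)
      fix u v s assume u: "u \<in> D" "u \<prec> B" and v: "v \<in> D" "v \<prec> B" and s: "s \<in> D" "s \<prec> B" "s = x \<oplus> (a \<oplus> \<one>)" "E (a \<oplus> \<one>) u" "E s v"
      obtain b where b: "b \<in> D" "E a b" "u = b \<oplus> b" using ES[OF a u(1)] s by blast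
      have s': "s = x \<oplus> a \<oplus> \<one>" using s a D by (simp add: add_assoc)
      obtain c where c: "c \<in> D" "E (x \<oplus> a) c" "v = c \<oplus> c" using ES[of "x \<oplus> a" v] s s' a D v by auto
      have bB: "b \<prec> B" by (rule le_less_trans[OF _ _ _ le_add[of b b]]) (use b u B in simp_all)
      have cB: "c \<prec> B" by (rule le_less_trans[OF _ _ _ le_add[of c c]]) (use c v B in simp_all)
      have xaB: "x \<oplus> a \<prec> B" by (rule trans[OF _ _ _ less_add1[of "x \<oplus> a"]]) (use s' s a D B in simp_all)
      have "c = p \<otimes> b" using Qa b c bB cB xaB a D by simp
      then show "v = p \<otimes> u" using b c D by (simp add: distL)
    qed
  qed (use D in auto)
  then show ?thesis using D B E by simp
qed

abbreviation bit where "bit u c \<equiv> bit_in K eps vx vy u c"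

lemma bit_char:
  assumes D: "u \<in> D" "c \<in> D" "p \<in> D" "q \<in> D" "r \<in> D" and E: "E u p" and c: "c = q \<otimes> p \<oplus> r" "r \<prec> p"
  shows "bit u c \<longleftrightarrow> odd q"
proof
  assume "bit u c"
  then obtain p' q' r' where w: "p' \<in> D" "E u p'" "q' \<in> D" "r' \<in> D" "c = q' \<otimes> p' \<oplus> r'" "r' \<prec> p'" "odd q'"
    unfolding bit_in_def odd_def by blast
  have "p' = p" using E_unique[of u p' p] w D E by simp
  then have "q' = q" using div_unique[of q' r' q r p] w D c by simp
  then show "odd q" using w by simp
next
  assume "odd q"
  then show "bit u c" unfolding bit_in_def odd_def using D E c by blast
qed

lemma bit_zero: "u \<in> D \<Longrightarrow> \<not> bit u \<zero>"
proof
  assume u: "u \<in> D" and "bit u \<zero>"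
  then obtain p q r s where w: "p \<in> D" "E u p" "q \<in> D" "r \<in> D" "\<zero> = q \<otimes> p \<oplus> r" "r \<prec> p" "s \<in> D" "q = s \<oplus> s \<oplus> \<one>"
    unfolding bit_in_def by blast
  have "\<one> \<preceq> q" using le_add2[of "\<one>" "s \<oplus> s"] w by simp
  then have "\<one> \<otimes> p \<preceq> q \<otimes> p" using mul_le_mono_r[of "\<one>" q p] w by simp
  then have 1: "p \<preceq> q \<otimes> p" using w by simp
  have 2: "q \<otimes> p \<preceq> \<zero>" using le_add[of "q \<otimes> p" r] w by simp
  have p0: "\<zero> \<prec> p" using E_pos u w by blast
  have q0: "\<zero> \<prec> q \<otimes> p" by (rule less_le_trans[OF _ _ _ p0 1]) (use w in simp_all)
  have "\<zero> \<prec> \<zero>" by (rule less_le_trans[OF _ _ _ q0 2]) (use w in simp_all)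
  then show False by simp
qed

lemma bit_le:
  assumes D: "u \<in> D" "c \<in> D" and b: "bit u c"
  shows "\<exists>p\<in>D. p \<preceq> c \<and> E u p \<and> (\<exists>q\<in>D. q \<preceq> c \<and> (\<exists>r\<in>D. r \<preceq> c \<and> c = q \<otimes> p \<oplus> r \<and> r \<prec> p \<and> (\<exists>s\<in>D. s \<preceq> c \<and> q = s \<oplus> s \<oplus> \<one>)))"
proof -
  obtain p q r s where w: "p \<in> D" "E u p" "q \<in> D" "r \<in> D" "c = q \<otimes> p \<oplus> r" "r \<prec> p" "s \<in> D" "q = s \<oplus> s \<oplus> \<one>"
    using b unfolding bit_in_def by blast
  have p1: "\<one> \<preceq> p" using E_ge1 D w by blast
  have q1: "\<one> \<preceq> q" using le_add2[of "\<one>" "s \<oplus> s"] w by simp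
  have cq: "q \<otimes> p \<preceq> c" using le_add[of "q \<otimes> p" r] w by simp
  have "\<one> \<otimes> p \<preceq> q \<otimes> p" using mul_le_mono_r[of "\<one>" q p] q1 w by simp
  then have pc: "p \<preceq> c" using cq w le_trans[of p "q \<otimes> p" c] D by simp
  have qc: "q \<preceq> c" using le_mul[of q p] p1 cq w le_trans[of q "q \<otimes> p" c] D by simp
  have rc: "r \<preceq> c" using le_add2[of r "q \<otimes> p"] w by simp
  have "s \<preceq> q" using w le_add[of s s] le_add[of "s \<oplus> s" "\<one>"] le_trans[of s "s \<oplus> s" "s \<oplus> s \<oplus> \<one>"] by simp
  then have sc: "s \<preceq> c" using qc le_trans[of s q c] w D by simp
  show ?thesis using w pc qc rc sc by blast
qed

lemma Cl_bit:
  assumes ij: "i \<noteq> j"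
  shows "Cl K b k (\<lambda>e. bit (e i) (e j))"
proof -
  define P where "P = i + j + 1"
  define Q where "Q = i + j + 2"
  define R where "R = i + j + 3"
  define S where "S = i + j + 4"
  let ?F = "BEx P (Plus (Var j) One) (Conj (Ef i P) (BEx Q (Plus (Var j) One) (BEx R (Plus (Var j) One)
     (Conj (Eq (Var j) (Plus (Times (Var Q) (Var P)) (Var R))) (Conj (Lt (Var R) (Var P))
       (BEx S (Plus (Var j) One) (Eq (Var Q) (Plus (Plus (Var S) (Var S)) One))))))))"
  have d: "delta0 ?F" by simp
  have "Cl K True 0 (\<lambda>e. bit (e i) (e j))"
  proof (rule Cl_ext[OF Cl_d0[OF d]])
    fix e assume e: "env_in K e"
    then have De: "e i \<in> D" "e j \<in> D" unfolding env_in_def by auto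
    have "sat K e ?F = (\<exists>p\<in>D. p \<prec> e j \<oplus> \<one> \<and> E (e i) p \<and> (\<exists>q\<in>D. q \<prec> e j \<oplus> \<one> \<and> (\<exists>r\<in>D. r \<prec> e j \<oplus> \<one> \<and>
        e j = q \<otimes> p \<oplus> r \<and> r \<prec> p \<and> (\<exists>s\<in>D. s \<prec> e j \<oplus> \<one> \<and> q = s \<oplus> s \<oplus> \<one>))))"
      using ij unfolding P_def Q_def R_def S_def by simp
    also have "\<dots> = bit (e i) (e j)"
    proof
      assume "\<exists>p\<in>D. p \<prec> e j \<oplus> \<one> \<and> E (e i) p \<and> (\<exists>q\<in>D. q \<prec> e j \<oplus> \<one> \<and> (\<exists>r\<in>D. r \<prec> e j \<oplus> \<one> \<and>
        e j = q \<otimes> p \<oplus> r \<and> r \<prec> p \<and> (\<exists>s\<in>D. s \<prec> e j \<oplus> \<one> \<and> q = s \<oplus> s \<oplus> \<one>)))"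
      then show "bit (e i) (e j)" unfolding bit_in_def by blast
    next
      assume "bit (e i) (e j)"
      from bit_le[OF De this] show "\<exists>p\<in>D. p \<prec> e j \<oplus> \<one> \<and> E (e i) p \<and> (\<exists>q\<in>D. q \<prec> e j \<oplus> \<one> \<and> (\<exists>r\<in>D. r \<prec> e j \<oplus> \<one> \<and>
        e j = q \<otimes> p \<oplus> r \<and> r \<prec> p \<and> (\<exists>s\<in>D. s \<prec> e j \<oplus> \<one> \<and> q = s \<oplus> s \<oplus> \<one>)))"
        using le_less_Suc De by blast
    qed
    finally show "sat K e ?F = bit (e i) (e j)" .
  qed
  then show ?thesis by (rule Cl_0)
qed

lemma small_lemma:
  assumes D: "q \<in> D" "p \<in> D" "r \<in> D" "P \<in> D" and r: "r \<prec> p" and lt: "q \<otimes> p \<oplus> r \<prec> P \<otimes> p"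
    and ev: "even q" "even P"
  shows "q \<otimes> p \<oplus> r \<oplus> p \<prec> P \<otimes> p"
proof -
  have "q \<otimes> p \<prec> P \<otimes> p" by (rule le_less_trans[OF _ _ _ le_add lt]) (use D in simp_all)
  then have "q \<prec> P" using mul_less_cancel_r D by blast
  then have "q \<oplus> \<one> \<prec> P" using even_less D ev by blast
  then have "q \<oplus> \<one> \<oplus> \<one> \<preceq> P" using less_succ_le D by simp
  then have 1: "(q \<oplus> \<one> \<oplus> \<one>) \<otimes> p \<preceq> P \<otimes> p" using mul_le_mono_r[of "q \<oplus> \<one> \<oplus> \<one>" P p] D by simp
  have "q \<otimes> p \<oplus> r \<prec> q \<otimes> p \<oplus> p" using add_less_cancel_l[of r p "q \<otimes> p"] D r by simp
  then have "q \<otimes> p \<oplus> r \<oplus> p \<prec> q \<otimes> p \<oplus> p \<oplus> p" using add_less_cancel_r[of "q \<otimes> p \<oplus> r" "q \<otimes> p \<oplus> p" p] D by simp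
  also have "q \<otimes> p \<oplus> p \<oplus> p = (q \<oplus> \<one> \<oplus> \<one>) \<otimes> p" using D by (simp add: distR)
  finally have 2: "q \<otimes> p \<oplus> r \<oplus> p \<prec> (q \<oplus> \<one> \<oplus> \<one>) \<otimes> p" .
  show ?thesis by (rule less_le_trans[OF _ _ _ 2 1]) (use D in simp_all)
qed

lemma pow_split:
  assumes D: "u \<in> D" "v \<in> D" "p \<in> D" "t \<in> D" and uv: "u \<prec> v" and E: "E u p" "E v t"
  shows "\<exists>P\<in>D. even P \<and> t = p \<otimes> P"
proof -
  obtain k where k: "k \<in> D" "u \<oplus> k = v" using less_ex uv D by blast
  have "k \<noteq> \<zero>" using k uv D by auto
  then obtain k' where k': "k' \<in> D" "k = k' \<oplus> \<one>" using pred_ex k by blast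
  obtain P where P: "P \<in> D" "E k P" using Etot k by blast
  obtain b where b: "b \<in> D" "E k' b" "P = b \<oplus> b" using ES[of k' P] P k' by auto
  have "t = p \<otimes> P" using E_mul[of u k p P t] D k P E by simp
  moreover have "even P" unfolding even_def using b by blast
  ultimately show ?thesis using P by blast
qed

lemma bit_add:
  assumes D: "u \<in> D" "d \<in> D" "p \<in> D" and Eu: "E u p" and nb: "\<not> bit u d" and v: "v \<in> D"
  shows "bit v (d \<oplus> p) \<longleftrightarrow> (bit v d \<or> v = u)"
proof -
  have p0: "\<zero> \<prec> p" using E_pos D Eu by blast
  obtain q r where qr: "q \<in> D" "r \<in> D" "d = q \<otimes> p \<oplus> r" "r \<prec> p" using div_ex[OF D(2,3) p0] by blast
  have "\<not> odd q" using bit_char[OF D(1,2,3) qr(1,2) Eu qr(3,4)] nb by simp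
  then have evq: "even q" using par_ex qr by blast
  have dp: "d \<oplus> p = (q \<oplus> \<one>) \<otimes> p \<oplus> r" using qr D by (simp add: ac)
  consider "v = u" | "v \<prec> u" | "u \<prec> v" using trich v D by blast
  then show ?thesis
  proof cases
    case 1
    have "bit u (d \<oplus> p)" using bit_char[of u "d \<oplus> p" p "q \<oplus> \<one>" r] dp qr D Eu even_Suc evq by simp
    then show ?thesis using 1 by simp
  next
    case 2
    obtain t where t: "t \<in> D" "E v t" using Etot v by blast
    obtain P where P: "P \<in> D" "even P" "p = t \<otimes> P" using pow_split[OF v D(1) t(1) D(3) 2 t(2) Eu] by blast
    have t0: "\<zero> \<prec> t" using E_pos v t by blast
    obtain q' r' where qr': "q' \<in> D" "r' \<in> D" "d = q' \<otimes> t \<oplus> r'" "r' \<prec> t" using div_ex[OF D(2) t(1) t0] by blast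
    have dp': "d \<oplus> p = (q' \<oplus> P) \<otimes> t \<oplus> r'" using qr' P t by (simp add: ac)
    have b1: "bit v d \<longleftrightarrow> odd q'" using bit_char[OF v D(2) t(1) qr'(1,2) t(2) qr'(3,4)] .
    have b2: "bit v (d \<oplus> p) \<longleftrightarrow> odd (q' \<oplus> P)" using bit_char[of v "d \<oplus> p" t "q' \<oplus> P" r'] v D t qr' P dp' by simp
    have "odd q' \<longleftrightarrow> odd (q' \<oplus> P)"
    proof
      assume "odd q'" then show "odd (q' \<oplus> P)" using odd_add_even qr' P by blast
    next
      assume o: "odd (q' \<oplus> P)"
      show "odd q'"
      proof (rule ccontr)
        assume "\<not> odd q'"
        then have "even q'" using par_ex qr' by blast
        then have "even (q' \<oplus> P)" using even_add qr' P by blast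
        then show False using not_even_odd[of "q' \<oplus> P"] o qr' P by simp
      qed
    qed
    then show ?thesis using b1 b2 2 v D by auto
  next
    case 3
    obtain t where t: "t \<in> D" "E v t" using Etot v by blast
    obtain P where P: "P \<in> D" "even P" "t = p \<otimes> P" using pow_split[OF D(1) v D(3) t(1) 3 Eu t(2)] by blast
    have t0: "\<zero> \<prec> t" using E_pos v t by blast
    obtain Q R where QR: "Q \<in> D" "R \<in> D" "d = Q \<otimes> t \<oplus> R" "R \<prec> t" using div_ex[OF D(2) t(1) t0] by blast
    obtain q'' r'' where qr'': "q'' \<in> D" "r'' \<in> D" "R = q'' \<otimes> p \<oplus> r''" "r'' \<prec> p" using div_ex[OF QR(2) D(3) p0] by blast
    have "d = (Q \<otimes> P \<oplus> q'') \<otimes> p \<oplus> r''" using QR qr'' P D by (simp add: ac)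
    then have "q = Q \<otimes> P \<oplus> q''" using div_unique[of q r "Q \<otimes> P \<oplus> q''" r'' p] qr qr'' QR P D by simp
    then have evq'': "even q''"
    proof -
      assume qe: "q = Q \<otimes> P \<oplus> q''"
      show "even q''"
      proof (rule ccontr)
        assume "\<not> even q''"
        then have "odd q''" using par_ex qr'' by blast
        then have "odd (q'' \<oplus> Q \<otimes> P)" using odd_add_even even_mul qr'' QR P by simp
        then have "odd q" using qe qr'' QR P add_comm by simp
        then show False using not_even_odd evq qr by blast
      qed
    qed
    have Rt: "q'' \<otimes> p \<oplus> r'' \<prec> P \<otimes> p" using QR qr'' P D mul_comm by simp
    have "R \<oplus> p \<prec> t" using small_lemma[OF qr''(1) D(3) qr''(2) P(1) qr''(4) Rt evq'' P(2)] qr'' P D mul_comm by simp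
    moreover have "d \<oplus> p = Q \<otimes> t \<oplus> (R \<oplus> p)" using QR D t by (simp add: add_assoc)
    ultimately have "bit v (d \<oplus> p) \<longleftrightarrow> odd Q" using bit_char[of v "d \<oplus> p" t Q "R \<oplus> p"] v D t QR by simp
    moreover have "bit v d \<longleftrightarrow> odd Q" using bit_char[OF v D(2) t(1) QR(1,2) t(2) QR(3,4)] .
    ultimately show ?thesis using 3 v D by auto
  qed
qed

lemma bit_add_lt:
  assumes D: "u \<in> D" "d \<in> D" "p \<in> D" "a \<in> D" "A \<in> D" and Eu: "E u p" and Ea: "E a A" and nb: "\<not> bit u d"
    and ua: "u \<prec> a" and dA: "d \<prec> A"
  shows "d \<oplus> p \<prec> A"
proof -
  have p0: "\<zero> \<prec> p" using E_pos D Eu by blast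
  obtain q r where qr: "q \<in> D" "r \<in> D" "d = q \<otimes> p \<oplus> r" "r \<prec> p" using div_ex[OF D(2,3) p0] by blast
  have "\<not> odd q" using bit_char[OF D(1,2,3) qr(1,2) Eu qr(3,4)] nb by simp
  then have evq: "even q" using par_ex qr by blast
  obtain P where P: "P \<in> D" "even P" "A = p \<otimes> P" using pow_split[OF D(1,4,3,5) ua Eu Ea] by blast
  have "q \<otimes> p \<oplus> r \<prec> P \<otimes> p" using dA qr P D mul_comm by simp
  then have "q \<otimes> p \<oplus> r \<oplus> p \<prec> P \<otimes> p" using small_lemma[OF qr(1) D(3) qr(2) P(1) qr(4)] evq P by blast
  then show ?thesis using qr P D mul_comm by simp
qed

end



definition bexP :: "'a struc \<Rightarrow> nat \<Rightarrow> nat \<Rightarrow> ((nat \<Rightarrow> 'a) \<Rightarrow> bool) \<Rightarrow> (nat \<Rightarrow> 'a) \<Rightarrow> bool" where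
  "bexP K u w P = (\<lambda>e. \<exists>a\<in>dom K. lt K a (e w) \<and> P (e(u:=a)))"
definition ballP :: "'a struc \<Rightarrow> nat \<Rightarrow> nat \<Rightarrow> ((nat \<Rightarrow> 'a) \<Rightarrow> bool) \<Rightarrow> (nat \<Rightarrow> 'a) \<Rightarrow> bool" where
  "ballP K u w P = (\<lambda>e. \<forall>a\<in>dom K. lt K a (e w) \<longrightarrow> P (e(u:=a)))"

definition BQ :: "'a struc \<Rightarrow> nat \<Rightarrow> bool" where
  "BQ K j \<longleftrightarrow> (\<forall>b P u w. u \<noteq> w \<longrightarrow> Cl K b j P \<longrightarrow> Cl K b j (bexP K u w P) \<and> Cl K b j (ballP K u w P))"

lemma indep_eq: "indep K P S \<Longrightarrow> env_in K e \<Longrightarrow> env_in K e' \<Longrightarrow> (\<And>i. i \<in> S \<Longrightarrow> e i = e' i) \<Longrightarrow> P e = P e'"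
  unfolding indep_def by blast

lemma Cl_lt: "Cl K b j (\<lambda>e. lt K (e u) (e w))"
  using Cl_0[OF Cl0_lt[of K b "Var u" "Var w"]] by simp

lemma Cl_le: "Cl K b j (\<lambda>e. lt K (e u) (e w) \<or> e u = e w)"
proof -
  have "Cl K b 0 (\<lambda>e. lt K (e u) (e w) \<or> e u = e w)"
    using Cl0_disj[OF Cl0_lt[of K b "Var u" "Var w"] Cl0_eq[of K b "Var u" "Var w"]] by simp
  then show ?thesis by (rule Cl_0)
qed

lemma Cl_bex_Sigma:
  assumes nz: "dom K \<noteq> {}" and uw: "u \<noteq> w" and P: "Cl K True j P"
  shows "Cl K True j (bexP K u w P)"
proof (cases j)
  case 0
  then show ?thesis using Cl0_bex[of K True P "Var w" u] P unfolding bexP_def by simp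
next
  case (Suc i)
  have c: "Cl K True (Suc i) (\<lambda>e. lt K (e u) (e w) \<and> P e)" using Cl_conj[OF nz Cl_lt P] Suc by simp
  have "Cl K True (Suc i) (\<lambda>e. \<exists>a\<in>dom K. lt K ((e(u:=a)) u) ((e(u:=a)) w) \<and> P (e(u:=a)))"
    by (rule Cl_ex[OF c])
  then show ?thesis unfolding bexP_def using uw Suc by simp
qed

lemma Cl_ball_Pi:
  assumes nz: "dom K \<noteq> {}" and uw: "u \<noteq> w" and P: "Cl K False j P"
  shows "Cl K False j (ballP K u w P)"
proof -
  have "Cl K True j (\<lambda>e. \<not> P e)" using Cl_neg[OF P] by simp
  then have "Cl K True j (bexP K u w (\<lambda>e. \<not> P e))" by (rule Cl_bex_Sigma[OF nz uw])
  then have "Cl K False j (\<lambda>e. \<not> bexP K u w (\<lambda>e. \<not> P e) e)" using Cl_neg by fastforce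
  then show ?thesis by (rule Cl_ext) (auto simp: bexP_def ballP_def)
qed

lemma NF:
  assumes nz: "dom K \<noteq> {}"
    and bq: "\<And>P u w. u \<noteq> w \<Longrightarrow> Cl K False i P \<Longrightarrow> Cl K False i (bexP K u w P)"
    and bnd: "\<And>a c. a \<in> dom K \<Longrightarrow> c \<in> dom K \<Longrightarrow> \<exists>b\<in>dom K. lt K a b \<and> lt K c b"
    and P: "Cl K True (Suc i) P" and F: "finite F"
  shows "\<exists>y R. y \<notin> F \<and> Cl K False i R \<and> (\<forall>e. env_in K e \<longrightarrow> P e = (\<exists>a\<in>dom K. R (e(y:=a))))"
proof -
  obtain vs g where g: "hier False i g" "\<forall>e. env_in K e \<longrightarrow> P e = sat K e (foldr Ex vs g)"
    using Cl_Sigma_repr[OF P] by blast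
  have "\<forall>F. finite F \<longrightarrow> (\<exists>y R. y \<notin> F \<and> Cl K False i R \<and> (\<forall>e. env_in K e \<longrightarrow> sat K e (foldr Ex vs g) = (\<exists>a\<in>dom K. R (e(y:=a)))))"
  proof (induction vs)
    case Nil
    show ?case
    proof (intro allI impI)
      fix F :: "nat set" assume F: "finite F"
      obtain y where y: "y \<notin> F \<union> fv g" using fresh_var[of "F \<union> fv g"] F finite_fv by auto
      have eq: "sat K e (foldr Ex [] g) = (\<exists>a\<in>dom K. sat K (e(y:=a)) g)" for e
      proof -
        have "sat K (e(y:=a)) g = sat K e g" for a by (rule sat_coinc) (use y in auto)
        then show ?thesis using nz by auto
      qed
      show "\<exists>y R. y \<notin> F \<and> Cl K False i R \<and> (\<forall>e. env_in K e \<longrightarrow> sat K e (foldr Ex [] g) = (\<exists>a\<in>dom K. R (e(y:=a))))"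
      proof (intro exI[of _ y] exI[of _ "\<lambda>e. sat K e g"] conjI allI impI)
        show "y \<notin> F" using y by simp
        show "Cl K False i (\<lambda>e. sat K e g)" by (rule Cl_sat[OF g(1)])
        fix e show "sat K e (foldr Ex [] g) = (\<exists>a\<in>dom K. sat K (e(y:=a)) g)" by (rule eq)
      qed
    qed
  next
    case (Cons v vs)
    show ?case
    proof (intro allI impI)
      fix F :: "nat set" assume F: "finite F"
      have fin: "finite (F \<union> {v})" using F by simp
      from Cons.IH[rule_format, OF fin] obtain y0 R0 where R0: "y0 \<notin> F \<union> {v}" "Cl K False i R0"
        "\<forall>e. env_in K e \<longrightarrow> sat K e (foldr Ex vs g) = (\<exists>a\<in>dom K. R0 (e(y0:=a)))"
        by blast
      obtain S0 where S0: "indep K R0 S0" using Cl_supp[OF R0(2)] by blast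
      obtain y where y: "y \<notin> F \<union> {v, y0} \<union> S0" using fresh_var[of "F \<union> {v, y0} \<union> S0"] F indep_finite[OF S0] by auto
      let ?R = "bexP K v y (bexP K y0 y R0)"
      have clR: "Cl K False i ?R" using bq bq[OF _ R0(2), of y0 y] y by auto
      have "sat K e (foldr Ex (v # vs) g) = (\<exists>b\<in>dom K. ?R (e(y:=b)))" if e: "env_in K e" for e
      proof -
        have ind: "R0 (e(y:=b, v:=a, y0:=c)) = R0 (e(v:=a, y0:=c))" if "a \<in> dom K" "b \<in> dom K" "c \<in> dom K" for a b c
          by (rule indep_eq[OF S0]) (use that e y in \<open>auto intro!: env_in_upd\<close>)
        have "sat K e (foldr Ex (v # vs) g) = (\<exists>a\<in>dom K. \<exists>c\<in>dom K. R0 (e(v:=a, y0:=c)))"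
          using R0(3) e by (simp add: env_in_upd)
        also have "\<dots> = (\<exists>b\<in>dom K. ?R (e(y:=b)))"
        proof
          assume "\<exists>a\<in>dom K. \<exists>c\<in>dom K. R0 (e(v:=a, y0:=c))"
          then obtain a c where ac: "a \<in> dom K" "c \<in> dom K" "R0 (e(v:=a, y0:=c))" by blast
          obtain b where b: "b \<in> dom K" "lt K a b" "lt K c b" using bnd ac by blast
          have "?R (e(y:=b))" unfolding bexP_def using y ac b ind by auto
          then show "\<exists>b\<in>dom K. ?R (e(y:=b))" using b by blast
        next
          assume "\<exists>b\<in>dom K. ?R (e(y:=b))"
          then obtain b where b: "b \<in> dom K" "?R (e(y:=b))" by blast
          then show "\<exists>a\<in>dom K. \<exists>c\<in>dom K. R0 (e(v:=a, y0:=c))" unfolding bexP_def using y ind by auto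
        qed
        finally show ?thesis .
      qed
      then show "\<exists>y R. y \<notin> F \<and> Cl K False i R \<and> (\<forall>e. env_in K e \<longrightarrow> sat K e (foldr Ex (v # vs) g) = (\<exists>a\<in>dom K. R (e(y:=a))))"
        using y clR by (intro exI[of _ y] exI[of _ ?R]) auto
    qed
  qed
  then obtain y R where "y \<notin> F" "Cl K False i R" "\<forall>e. env_in K e \<longrightarrow> sat K e (foldr Ex vs g) = (\<exists>a\<in>dom K. R (e(y:=a)))"
    using F by blast
  then show ?thesis using g(2) by (intro exI[of _ y] exI[of _ R]) auto
qed



context pam begin
lemma bnd: "a \<in> D \<Longrightarrow> c \<in> D \<Longrightarrow> \<exists>b\<in>D. a \<prec> b \<and> c \<prec> b"
  using bound3[of a c "\<zero>"] by auto
end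

locale kth = pa0 +
  fixes n :: nat
  assumes indn: "Sigma n f \<Longrightarrow> ind K f x"
begin

lemma ind_cl:
  assumes "Cl K True j P" "j \<le> n" "env_in K e" "\<And>a. a \<in> D \<Longrightarrow> P (e(x:=a)) = Q a"
    "Q \<zero>" "\<And>a. a \<in> D \<Longrightarrow> Q a \<Longrightarrow> Q (a \<oplus> \<one>)" "a \<in> D"
  shows "Q a"
proof -
  obtain f where f0: "hier True j f" "\<forall>e. env_in K e \<longrightarrow> P e = sat K e f" using assms(1) unfolding Cl_def by auto
  have f1: "Sigma n f" using hier_mono[OF f0(1) assms(2)] .
  have ee: "\<And>a. a \<in> D \<Longrightarrow> env_in K (e(x:=a))" by (rule env_in_upd[OF assms(3)])
  have sq: "\<And>a. a \<in> D \<Longrightarrow> sat K (e(x:=a)) f = Q a" using f0(2) assms(4) ee by simp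
  note i = indn[OF f1, of x, unfolded ind_def, rule_format, OF assms(3)]
  have base: "sat K (e(x:=\<zero>)) f" using sq[of "\<zero>"] assms(5) by simp
  have step: "\<forall>a\<in>D. sat K (e(x:=a)) f \<longrightarrow> sat K (e(x:=a \<oplus> \<one>)) f"
  proof (intro ballI impI)
    fix a assume a: "a \<in> D" "sat K (e(x:=a)) f"
    then have "Q a" using sq by simp
    then have "Q (a \<oplus> \<one>)" using assms(6) a by simp
    then show "sat K (e(x:=a \<oplus> \<one>)) f" using sq[of "a \<oplus> \<one>"] a by simp
  qed
  have "sat K (e(x:=a)) f" by (rule i) (use base step assms(7) in blast)+
  then show ?thesis using sq assms(7) by simp
qed

lemma Coll:
  assumes j: "Suc i \<le> n" and bq: "BQ K i" and R: "Cl K False i R" and d: "u \<noteq> y" "u \<noteq> w" "y \<noteq> w"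
    and e: "env_in K e" and h: "\<forall>a\<in>D. a \<prec> e w \<longrightarrow> (\<exists>c\<in>D. R (e(u:=a, y:=c)))"
  shows "\<exists>b\<in>D. \<forall>a\<in>D. a \<prec> e w \<longrightarrow> (\<exists>c\<in>D. c \<prec> b \<and> R (e(u:=a, y:=c)))"
proof -
  obtain S where S: "indep K R S" using Cl_supp[OF R] by blast
  obtain z where z: "z \<notin> S \<union> {u, y, w}" using fresh_var[of "S \<union> {u, y, w}"] indep_finite[OF S] by auto
  obtain z' where z': "z' \<notin> S \<union> {u, y, w, z}" using fresh_var[of "S \<union> {u, y, w, z}"] indep_finite[OF S] by auto
  let ?I = "ballP K u z (bexP K y z' R)"
  have I1: "Cl K False i (bexP K y z' R)" using bq R z' unfolding BQ_def by auto
  have I: "Cl K False i ?I" using bq I1 z unfolding BQ_def by auto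
  let ?Psi = "\<lambda>e'. \<not> (e' z \<prec> e' w \<or> e' z = e' w) \<or> (\<exists>b\<in>D. ?I (e'(z':=b)))"
  have c1: "Cl K True (Suc i) (\<lambda>e'. \<not> (e' z \<prec> e' w \<or> e' z = e' w))"
    using Cl_neg[OF Cl_le[of K False "Suc i" z w]] by simp
  have c2: "Cl K True (Suc i) (\<lambda>e'. \<exists>b\<in>D. ?I (e'(z':=b)))"
    by (rule Cl_ex[OF Cl_dual]) (use I in simp)
  have clPsi: "Cl K True (Suc i) ?Psi" by (rule Cl_disj[OF nz c1 c2])
  have Req: "R (e(z:=t, z':=b, u:=a, y:=c)) = R (e(u:=a, y:=c))" if "t \<in> D" "b \<in> D" "a \<in> D" "c \<in> D" for t b a c
    by (rule indep_eq[OF S]) (use that e z z' in \<open>auto intro!: env_in_upd\<close>)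
  let ?Q = "\<lambda>t. \<not> (t \<prec> e w \<or> t = e w) \<or> (\<exists>b\<in>D. \<forall>a\<in>D. a \<prec> t \<longrightarrow> (\<exists>c\<in>D. c \<prec> b \<and> R (e(u:=a, y:=c))))"
  have ew: "e w \<in> D" using e unfolding env_in_def by auto
  have "?Q (e w)"
  proof (rule ind_cl[where P="?Psi" and e=e and x=z and j="Suc i" and Q="?Q"])
    show "Cl K True (Suc i) ?Psi" by (rule clPsi)
  next
    fix t assume t: "t \<in> D"
    show "?Psi (e(z:=t)) = ?Q t"
      unfolding ballP_def bexP_def using z z' Req t by (simp cong: conj_cong)
  next
    show "?Q \<zero>" by (rule disjI2, rule bexI[of _ "\<zero>"]) auto
  next
    fix t assume t: "t \<in> D" and Qt: "?Q t"
    show "?Q (t \<oplus> \<one>)"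
    proof (cases "t \<oplus> \<one> \<prec> e w \<or> t \<oplus> \<one> = e w")
      case False then show ?thesis by blast
    next
      case True
      have tw: "t \<prec> e w" by (rule less_le_trans[OF _ _ _ less_add1[OF t] True]) (use t ew in simp_all)
      then obtain b where b: "b \<in> D" "\<forall>a\<in>D. a \<prec> t \<longrightarrow> (\<exists>c\<in>D. c \<prec> b \<and> R (e(u:=a, y:=c)))" using Qt by blast
      obtain c0 where c0: "c0 \<in> D" "R (e(u:=t, y:=c0))" using h tw t by blast
      obtain m where m: "m \<in> D" "b \<preceq> m" "c0 \<oplus> \<one> \<preceq> m" using max_ex[of b "c0 \<oplus> \<one>"] b c0 by auto
      have "\<forall>a\<in>D. a \<prec> t \<oplus> \<one> \<longrightarrow> (\<exists>c\<in>D. c \<prec> m \<and> R (e(u:=a, y:=c)))"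
      proof (intro ballI impI)
        fix a assume a: "a \<in> D" "a \<prec> t \<oplus> \<one>"
        then have "a \<prec> t \<or> a = t" using less_Suc t by blast
        then show "\<exists>c\<in>D. c \<prec> m \<and> R (e(u:=a, y:=c))"
        proof
          assume "a \<prec> t"
          then obtain c where "c \<in> D" "c \<prec> b" "R (e(u:=a, y:=c))" using b a by blast
          moreover have "c \<prec> m" using less_le_trans[of c b m] calculation m b by simp
          ultimately show ?thesis by blast
        next
          assume "a = t"
          moreover have "c0 \<prec> m" using less_le_trans[of c0 "c0 \<oplus> \<one>" m] c0 m by simp
          ultimately show ?thesis using c0 by blast
        qed
      qed
      then show ?thesis using m by blast
    qed
  qed (use j e ew in auto)
  then show ?thesis using irrefl ew by blast
qed

lemma Sig_ball:
  assumes j: "Suc i \<le> n" and bq: "BQ K i" and uw: "u \<noteq> w" and P: "Cl K True (Suc i) P"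
  shows "Cl K True (Suc i) (ballP K u w P)"
proof -
  have bqP: "\<And>P u w. u \<noteq> w \<Longrightarrow> Cl K False i P \<Longrightarrow> Cl K False i (bexP K u w P)"
    using bq unfolding BQ_def by blast
  obtain y R where yR: "y \<notin> {u, w}" "Cl K False i R" "\<forall>e. env_in K e \<longrightarrow> P e = (\<exists>a\<in>D. R (e(y:=a)))"
    using NF[OF nz bqP _ P, of "{u, w}"] bnd by blast
  obtain S where S: "indep K R S" using Cl_supp[OF yR(2)] by blast
  obtain z where z: "z \<notin> S \<union> {u, y, w}" using fresh_var[of "S \<union> {u, y, w}"] indep_finite[OF S] by auto
  let ?T = "\<lambda>e. \<exists>b\<in>D. ballP K u w (bexP K y z R) (e(z:=b))"
  have I1: "Cl K False i (bexP K y z R)" using bqP[OF _ yR(2), of y z] z by auto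
  have I2: "Cl K False i (ballP K u w (bexP K y z R))" using bq I1 uw unfolding BQ_def by auto
  have clT: "Cl K True (Suc i) ?T" by (rule Cl_ex[OF Cl_dual]) (use I2 in simp)
  show ?thesis
  proof (rule Cl_ext[OF clT])
    fix e assume e: "env_in K e"
    have Req: "R (e(z:=b, u:=a, y:=c)) = R (e(u:=a, y:=c))" if "b \<in> D" "a \<in> D" "c \<in> D" for b a c
      by (rule indep_eq[OF S]) (use that e z in \<open>auto intro!: env_in_upd\<close>)
    have Pu: "P (e(u:=a)) = (\<exists>c\<in>D. R (e(u:=a, y:=c)))" if "a \<in> D" for a
      using yR(3) env_in_upd[OF e that] by simp
    have T: "?T e = (\<exists>b\<in>D. \<forall>a\<in>D. a \<prec> e w \<longrightarrow> (\<exists>c\<in>D. c \<prec> b \<and> R (e(u:=a, y:=c))))"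
      unfolding ballP_def bexP_def using z Req yR(1) by (simp cong: conj_cong)
    have B: "ballP K u w P e = (\<forall>a\<in>D. a \<prec> e w \<longrightarrow> (\<exists>c\<in>D. R (e(u:=a, y:=c))))"
      unfolding ballP_def using Pu by simp
    show "?T e = ballP K u w P e"
    proof
      assume "?T e" then show "ballP K u w P e" unfolding T B by blast
    next
      assume "ballP K u w P e"
      then have "\<exists>b\<in>D. \<forall>a\<in>D. a \<prec> e w \<longrightarrow> (\<exists>c\<in>D. c \<prec> b \<and> R (e(u:=a, y:=c)))"
        unfolding B using Coll[OF j bq yR(2), of u y w e] yR(1) uw e by auto
      then show "?T e" unfolding T .
    qed
  qed
qed

lemma BQ_all: "j \<le> n \<Longrightarrow> BQ K j"
proof (induction j)
  case 0
  show ?case unfolding BQ_def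
  proof (intro allI impI conjI)
    fix b :: bool and P and u w :: nat assume uw: "u \<noteq> w" and P: "Cl K b 0 P"
    show "Cl K b 0 (bexP K u w P)" using Cl0_bex[OF P, of "Var w" u] unfolding bexP_def by simp
    show "Cl K b 0 (ballP K u w P)" using Cl0_ball[OF P, of "Var w" u] unfolding ballP_def by simp
  qed
next
  case (Suc i)
  then have bq: "BQ K i" by simp
  have sb: "Cl K True (Suc i) (ballP K u w P)" if "u \<noteq> w" "Cl K True (Suc i) P" for u w P
    by (rule Sig_ball[OF Suc.prems bq that])
  show ?case unfolding BQ_def
  proof (intro allI impI conjI)
    fix b :: bool and P and u w :: nat assume uw: "u \<noteq> w" and P: "Cl K b (Suc i) P"
    show "Cl K b (Suc i) (bexP K u w P)"
    proof (cases b)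
      case True then show ?thesis using Cl_bex_Sigma[OF nz uw] P by simp
    next
      case False
      have "Cl K True (Suc i) (\<lambda>e. \<not> P e)" using Cl_neg[OF P] False by simp
      then have "Cl K True (Suc i) (ballP K u w (\<lambda>e. \<not> P e))" by (rule sb[OF uw])
      then have "Cl K False (Suc i) (\<lambda>e. \<not> ballP K u w (\<lambda>e. \<not> P e) e)" using Cl_neg by fastforce
      then have "Cl K False (Suc i) (bexP K u w P)" by (rule Cl_ext) (auto simp: bexP_def ballP_def)
      then show ?thesis using False by simp
    qed
    show "Cl K b (Suc i) (ballP K u w P)"
    proof (cases b)
      case True then show ?thesis using sb[OF uw] P by simp
    next
      case False then show ?thesis using Cl_ball_Pi[OF nz uw] P by simp
    qed
  qed
qed

lemma Pi_bex: "j \<le> n \<Longrightarrow> u \<noteq> w \<Longrightarrow> Cl K False j P \<Longrightarrow> Cl K False j (bexP K u w P)"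
  using BQ_all unfolding BQ_def by blast
lemma Pi_ball: "j \<le> n \<Longrightarrow> u \<noteq> w \<Longrightarrow> Cl K False j P \<Longrightarrow> Cl K False j (ballP K u w P)"
  using BQ_all unfolding BQ_def by blast

lemma ind_Pi:
  assumes Q: "Cl K False j Q" and j: "j \<le> n" and e: "env_in K e" and base: "Q (e(x:=\<zero>))"
    and step: "\<And>a. a \<in> D \<Longrightarrow> Q (e(x:=a)) \<Longrightarrow> Q (e(x:=a \<oplus> \<one>))" and c: "c \<in> D"
  shows "Q (e(x:=c))"
proof (rule ccontr)
  assume nQ: "\<not> Q (e(x:=c))"
  obtain S where S: "indep K Q S" using Cl_supp[OF Q] by blast
  obtain y where y: "y \<notin> S \<union> {x}" using fresh_var[of "S \<union> {x}"] indep_finite[OF S] by auto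
  obtain z where z: "z \<notin> S \<union> {x, y}" using fresh_var[of "S \<union> {x, y}"] indep_finite[OF S] by auto
  obtain w where w: "w \<notin> S \<union> {x, y, z}" using fresh_var[of "S \<union> {x, y, z}"] indep_finite[OF S] by auto
  let ?Q' = "\<lambda>e'. Q (e' \<circ> sw x y)"
  have Q': "Cl K False j ?Q'" by (rule Cl_ren[OF sw_inj Q])
  let ?In = "\<lambda>e'. e' y \<oplus> e' x = e' w \<and> \<not> ?Q' e'"
  have eqc: "Cl K True j (\<lambda>e'. e' y \<oplus> e' x = e' w)"
    using Cl_0[OF Cl0_eq[of K True "Plus (Var y) (Var x)" "Var w"]] by simp
  have In: "Cl K True j ?In" by (rule Cl_conj[OF nz eqc]) (use Cl_neg[OF Q'] in simp)
  have Sp: "Cl K True j (bexP K y z ?In)" by (rule Cl_bex_Sigma[OF nz _ In]) (use z in simp)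
  define e0 where "e0 = e(z := c \<oplus> \<one>, w := c)"
  have e0: "env_in K e0" unfolding e0_def using e c by (auto intro!: env_in_upd)
  have Qeq: "Q ((e0(x:=t, y:=d)) \<circ> sw x y) = Q (e(x:=d))" if "t \<in> D" "d \<in> D" for t d
  proof (rule indep_eq[OF S])
    show "env_in K ((e0(x:=t, y:=d)) \<circ> sw x y)" by (rule env_in_comp) (use e0 that in \<open>auto intro!: env_in_upd\<close>)
    show "env_in K (e(x:=d))" using e that by (auto intro!: env_in_upd)
    fix i assume "i \<in> S"
    then show "((e0(x:=t, y:=d)) \<circ> sw x y) i = (e(x:=d)) i" using y z w unfolding e0_def sw_def by auto
  qed
  let ?T = "\<lambda>t. \<exists>d\<in>D. d \<prec> c \<oplus> \<one> \<and> d \<oplus> t = c \<and> \<not> Q (e(x:=d))"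
  have "?T c"
  proof (rule ind_cl[where P="bexP K y z ?In" and e=e0 and x=x and j=j and Q="?T"])
    fix t assume t: "t \<in> D"
    have "bexP K y z ?In (e0(x:=t)) = (\<exists>d\<in>D. d \<prec> c \<oplus> \<one> \<and> d \<oplus> t = c \<and> \<not> Q ((e0(x:=t, y:=d)) \<circ> sw x y))"
      unfolding bexP_def using y z w by (simp add: e0_def)
    then show "bexP K y z ?In (e0(x:=t)) = ?T t" using Qeq t by (auto cong: conj_cong)
  next
    show "?T \<zero>" using nQ c by (intro bexI[of _ c]) auto
  next
    fix t assume t: "t \<in> D" and Tt: "?T t"
    then obtain d where d: "d \<in> D" "d \<prec> c \<oplus> \<one>" "d \<oplus> t = c" "\<not> Q (e(x:=d))" by blast
    have "d \<noteq> \<zero>" using d base by auto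
    then obtain d' where d': "d' \<in> D" "d = d' \<oplus> \<one>" using pred_ex d by blast
    have "\<not> Q (e(x:=d'))" using step[OF d'(1)] d d' by auto
    moreover have "d' \<oplus> (t \<oplus> \<one>) = c" using d d' t by (simp add: ac)
    moreover have "d' \<prec> c \<oplus> \<one>" using d d' c by (meson addD oD less_add1 trans)
    ultimately show "?T (t \<oplus> \<one>)" using d' by blast
  qed (use Sp j e0 c in auto)
  then obtain d where d: "d \<in> D" "d \<oplus> c = c" "\<not> Q (e(x:=d))" by blast
  have "d = \<zero>" using add_cancel_r[of d "\<zero>" c] d c by simp
  then show False using d base by simp
qed

end



lemma eval_restr: "eval (restr K M) e t = eval K e t"
  by (induction t) (auto simp: restr_def)

lemma dom_restr[simp]: "dom (restr K M) = M" and lt_restr[simp]: "lt (restr K M) = lt K"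
  and zer_restr[simp]: "zer (restr K M) = zer K"
  by (auto simp: restr_def)

locale setting = kth +
  fixes M :: "'a set"
  assumes ee: "end_ext M K"
    and IM: "IDelta0_exp (restr K M) eps vx vy"
begin

lemma MD: "M \<subseteq> D" using ee unfolding end_ext_def by auto
lemma Mz: "\<zero> \<in> M" and Mo: "\<one> \<in> M" using ee unfolding end_ext_def by auto
lemma Madd: "x \<in> M \<Longrightarrow> y \<in> M \<Longrightarrow> x \<oplus> y \<in> M" and Mmul: "x \<in> M \<Longrightarrow> y \<in> M \<Longrightarrow> x \<otimes> y \<in> M"
  using ee unfolding end_ext_def by auto
lemma Minit: "u \<in> D \<Longrightarrow> a \<in> M \<Longrightarrow> u \<prec> a \<Longrightarrow> u \<in> M"
proof (rule ccontr)
  assume u: "u \<in> D" "a \<in> M" "u \<prec> a" "u \<notin> M"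
  then have "a \<prec> u" using ee unfolding end_ext_def by auto
  then show False using u asym MD by blast
qed

lemma eval_M: "(\<forall>i. e i \<in> M) \<Longrightarrow> eval K e t \<in> M"
  by (induction t) (auto simp: Mz Mo Madd Mmul)

lemma absolute: "delta0 f \<Longrightarrow> (\<forall>i. e i \<in> M) \<Longrightarrow> sat (restr K M) e f = sat K e f"
proof (induction f arbitrary: e)
  case (Eq s t) then show ?case by (simp add: eval_restr)
next
  case (Lt s t) then show ?case by (simp add: eval_restr)
next
  case (BEx v t f)
  have tM: "eval K e t \<in> M" using eval_M BEx.prems by blast
  have "(\<exists>a\<in>M. lt K a (eval K e t) \<and> sat (restr K M) (e(v:=a)) f) = (\<exists>a\<in>D. lt K a (eval K e t) \<and> sat K (e(v:=a)) f)"
  proof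
    assume "\<exists>a\<in>M. lt K a (eval K e t) \<and> sat (restr K M) (e(v:=a)) f"
    then obtain a where a: "a \<in> M" "lt K a (eval K e t)" "sat (restr K M) (e(v:=a)) f" by blast
    have allM: "\<forall>i. (e(v:=a)) i \<in> M" using a(1) BEx.prems(2) by auto
    have df: "delta0 f" using BEx.prems(1) by simp
    have X: "sat (restr K M) (e(v:=a)) f = sat K (e(v:=a)) f" by (rule BEx.IH[OF df allM])
    have "sat K (e(v:=a)) f" using a(3) unfolding X .
    then show "\<exists>a\<in>D. lt K a (eval K e t) \<and> sat K (e(v:=a)) f" using a MD by blast
  next
    assume "\<exists>a\<in>D. lt K a (eval K e t) \<and> sat K (e(v:=a)) f"
    then obtain a where a: "a \<in> D" "lt K a (eval K e t)" "sat K (e(v:=a)) f" by blast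
    have aM: "a \<in> M" using Minit a tM by blast
    have allM: "\<forall>i. (e(v:=a)) i \<in> M" using aM BEx.prems(2) by auto
    have df: "delta0 f" using BEx.prems(1) by simp
    have X: "sat (restr K M) (e(v:=a)) f = sat K (e(v:=a)) f" by (rule BEx.IH[OF df allM])
    have "sat (restr K M) (e(v:=a)) f" using a(3) unfolding X .
    then show "\<exists>a\<in>M. lt K a (eval K e t) \<and> sat (restr K M) (e(v:=a)) f" using a aM by blast
  qed
  then show ?case by (simp add: eval_restr)
next
  case (BAll v t f)
  have tM: "eval K e t \<in> M" using eval_M BAll.prems by blast
  have "(\<forall>a\<in>M. lt K a (eval K e t) \<longrightarrow> sat (restr K M) (e(v:=a)) f) = (\<forall>a\<in>D. lt K a (eval K e t) \<longrightarrow> sat K (e(v:=a)) f)"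
  proof
    assume h: "\<forall>a\<in>M. lt K a (eval K e t) \<longrightarrow> sat (restr K M) (e(v:=a)) f"
    show "\<forall>a\<in>D. lt K a (eval K e t) \<longrightarrow> sat K (e(v:=a)) f"
    proof (intro ballI impI)
      fix a assume a: "a \<in> D" "lt K a (eval K e t)"
      have aM: "a \<in> M" using Minit a tM by blast
      have allM: "\<forall>i. (e(v:=a)) i \<in> M" using aM BAll.prems(2) by auto
      have df: "delta0 f" using BAll.prems(1) by simp
      have X: "sat (restr K M) (e(v:=a)) f = sat K (e(v:=a)) f" by (rule BAll.IH[OF df allM])
      have "sat (restr K M) (e(v:=a)) f" using h a aM by simp
      then show "sat K (e(v:=a)) f" unfolding X .
    qed
  next
    assume h: "\<forall>a\<in>D. lt K a (eval K e t) \<longrightarrow> sat K (e(v:=a)) f"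
    show "\<forall>a\<in>M. lt K a (eval K e t) \<longrightarrow> sat (restr K M) (e(v:=a)) f"
    proof (intro ballI impI)
      fix a assume a: "a \<in> M" "lt K a (eval K e t)"
      have allM: "\<forall>i. (e(v:=a)) i \<in> M" using a(1) BAll.prems(2) by auto
      have df: "delta0 f" using BAll.prems(1) by simp
      have X: "sat (restr K M) (e(v:=a)) f = sat K (e(v:=a)) f" by (rule BAll.IH[OF df allM])
      have "sat K (e(v:=a)) f" using h a MD by auto
      then show "sat (restr K M) (e(v:=a)) f" unfolding X .
    qed
  qed
  then show ?case by (simp add: eval_restr)
qed (auto)

lemma expM: "a \<in> M \<Longrightarrow> \<exists>A\<in>M. E a A"
proof -
  assume a: "a \<in> M"
  have "exp_ok (restr K M) eps vx vy" using IM unfolding IDelta0_exp_def by auto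
  then obtain A where A: "A \<in> M" "Egraph (restr K M) eps vx vy a A" unfolding exp_ok_def using a by auto
  have "sat (restr K M) ((\<lambda>_. zer K)(vx := a, vy := A)) eps = sat K ((\<lambda>_. zer K)(vx := a, vy := A)) eps"
    by (rule absolute) (use exp_facts(1) a A Mz in auto)
  then show ?thesis using A unfolding Egraph_def by auto
qed

lemma M_ind_cl:
  assumes Mind: "M_ISigma (Suc n) M K" and P: "Cl K True (Suc n) P" and e: "env_in K e" and a: "a \<in> M"
    and val: "\<And>k. k \<in> D \<Longrightarrow> P (e(x:=k)) = Q k" and base: "Q \<zero>"
    and step: "\<And>k. k \<in> D \<Longrightarrow> k \<prec> a \<Longrightarrow> Q k \<Longrightarrow> Q (k \<oplus> \<one>)"
    and k: "k \<in> D" "k \<prec> a"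
  shows "Q k"
proof -
  obtain f where f: "Sigma (Suc n) f" "\<forall>e. env_in K e \<longrightarrow> P e = sat K e f" using P unfolding Cl_def by auto
  have ee: "\<And>a. a \<in> D \<Longrightarrow> env_in K (e(x:=a))" by (rule env_in_upd[OF e])
  have sq: "\<And>a. a \<in> D \<Longrightarrow> sat K (e(x:=a)) f = Q a" using f(2) val ee by simp
  have i: "sat K (e(x := \<zero>)) f \<and> (\<forall>b\<in>D. b \<prec> a \<longrightarrow> sat K (e(x := b)) f \<longrightarrow> sat K (e(x := b \<oplus> \<one>)) f)
     \<longrightarrow> (\<forall>b\<in>D. b \<prec> a \<longrightarrow> sat K (e(x := b)) f)"
    using Mind f(1) e a unfolding M_ISigma_def by blast
  have "sat K (e(x := \<zero>)) f" using sq[of "\<zero>"] base by simp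
  moreover have "\<forall>b\<in>D. b \<prec> a \<longrightarrow> sat K (e(x := b)) f \<longrightarrow> sat K (e(x := b \<oplus> \<one>)) f"
    using sq step by simp
  ultimately have "\<forall>b\<in>D. b \<prec> a \<longrightarrow> sat K (e(x := b)) f" using i by blast
  then show ?thesis using sq k by simp
qed

lemma core:
  assumes Mind: "M_ISigma (Suc n) M K" and R: "Cl K False n R" and xy: "x \<noteq> y" and e: "env_in K e" and a: "a \<in> M"
  shows "\<exists>d\<in>D. \<exists>b\<in>D. \<forall>u\<in>D. u \<prec> a \<longrightarrow>
     (((\<exists>w\<in>D. R (e(x:=u, y:=w))) \<longleftrightarrow> bit u d) \<and>
      ((\<exists>w\<in>D. R (e(x:=u, y:=w))) \<longleftrightarrow> (\<exists>w\<in>D. w \<prec> b \<and> R (e(x:=u, y:=w)))))"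
proof -
  have aD: "a \<in> D" using a MD by blast
  obtain A where A: "A \<in> M" "E a A" using expM[OF a] by blast
  have AD: "A \<in> D" using A MD by blast
  have A1: "A \<oplus> \<one> \<in> M" using Madd[OF A(1) Mo] .
  obtain S where S: "indep K R S" using Cl_supp[OF R] by blast
  have fS: "finite S" using indep_finite[OF S] .
  obtain kv where kv: "kv \<notin> S \<union> {x, y}" using fresh_var[of "S \<union> {x, y}"] fS by auto
  obtain dv where dv: "dv \<notin> S \<union> {x, y, kv}" using fresh_var[of "S \<union> {x, y, kv}"] fS by auto
  obtain bv where bv: "bv \<notin> S \<union> {x, y, kv, dv}" using fresh_var[of "S \<union> {x, y, kv, dv}"] fS by auto
  obtain Av where Av: "Av \<notin> S \<union> {x, y, kv, dv, bv}" using fresh_var[of "S \<union> {x, y, kv, dv, bv}"] fS by auto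
  obtain av where av: "av \<notin> S \<union> {x, y, kv, dv, bv, Av}" using fresh_var[of "S \<union> {x, y, kv, dv, bv, Av}"] fS by auto
  have ne: "kv \<noteq> x" "kv \<noteq> y" "dv \<noteq> x" "dv \<noteq> y" "dv \<noteq> kv" "bv \<noteq> x" "bv \<noteq> y" "bv \<noteq> kv" "bv \<noteq> dv"
    "Av \<noteq> x" "Av \<noteq> y" "Av \<noteq> kv" "Av \<noteq> dv" "Av \<noteq> bv" "av \<noteq> x" "av \<noteq> y" "av \<noteq> kv" "av \<noteq> dv" "av \<noteq> bv" "av \<noteq> Av"
    using kv dv bv Av av by auto
  let ?I1 = "bexP K y bv R"
  have I1: "Cl K False n ?I1" by (rule Pi_bex[OF order.refl _ R]) (use bv in auto)
  let ?I2 = "\<lambda>e'. \<not> bit (e' x) (e' dv) \<or> ?I1 e'"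
  have nb: "Cl K False n (\<lambda>e'. \<not> bit (e' x) (e' dv))" using Cl_neg[OF Cl_bit[of x dv True n]] dv by simp
  have I2: "Cl K False n ?I2" by (rule Cl_disj[OF nz nb I1])
  let ?I3 = "ballP K x av ?I2"
  have I3: "Cl K False n ?I3" by (rule Pi_ball[OF order.refl _ I2]) (use av in auto)
  let ?I4 = "\<lambda>e'. \<exists>b\<in>D. ?I3 (e'(bv:=b))"
  have I4: "Cl K True (Suc n) ?I4" by (rule Cl_ex[OF Cl_dual]) (use I3 in simp)
  let ?D0 = "\<lambda>e'. e' dv \<prec> e' Av \<and> (e' kv \<prec> e' dv \<or> e' kv = e' dv)"
  have D0: "Cl K True (Suc n) ?D0"
  proof -
    have "Cl K True 0 ?D0"
      using Cl0_conj[OF Cl0_lt[of K True "Var dv" "Var Av"] Cl0_disj[OF Cl0_lt[of K True "Var kv" "Var dv"] Cl0_eq[of K True "Var kv" "Var dv"]]]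
      by simp
    then show ?thesis by (rule Cl_0)
  qed
  let ?I5 = "\<lambda>e'. ?D0 e' \<and> ?I4 e'"
  have I5: "Cl K True (Suc n) ?I5" by (rule Cl_conj[OF nz D0 I4])
  let ?Psi = "\<lambda>e'. \<exists>d\<in>D. ?I5 (e'(dv:=d))"
  have Psi: "Cl K True (Suc n) ?Psi" by (rule Cl_ex[OF I5])
  define e0 where "e0 = e(Av := A, av := a)"
  have e0: "env_in K e0" unfolding e0_def using e AD aD by (auto intro!: env_in_upd)
  let ?psi = "\<lambda>k. \<exists>d\<in>D. d \<prec> A \<and> (k \<prec> d \<or> k = d) \<and>
       (\<exists>b\<in>D. \<forall>u\<in>D. u \<prec> a \<longrightarrow> (\<not> bit u d \<or> (\<exists>w\<in>D. w \<prec> b \<and> R (e(x:=u, y:=w)))))"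
  have Req: "R (e0(kv:=k, dv:=d, bv:=b, x:=u, y:=w)) = R (e(x:=u, y:=w))"
    if "k \<in> D" "d \<in> D" "b \<in> D" "u \<in> D" "w \<in> D" for k d b u w
    by (rule indep_eq[OF S]) (use that e e0 kv dv bv Av av in \<open>auto intro!: env_in_upd simp: e0_def\<close>)
  have val: "?Psi (e0(kv:=k)) = ?psi k" if k: "k \<in> D" for k
    unfolding ballP_def bexP_def using xy Req k ne ne[symmetric] by (simp add: e0_def cong: conj_cong)
  have psi0: "?psi \<zero>"
  proof -
    have "\<zero> \<prec> A" using E_pos aD AD A by blast
    moreover have "\<exists>b\<in>D. \<forall>u\<in>D. u \<prec> a \<longrightarrow> (\<not> bit u \<zero> \<or> (\<exists>w\<in>D. w \<prec> b \<and> R (e(x:=u, y:=w))))"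
      using bit_zero zD by blast
    ultimately show ?thesis using zD by (intro bexI[of _ "\<zero>"] conjI) (auto simp: bit_zero)
  qed
  have "\<exists>k\<in>D. k \<prec> A \<oplus> \<one> \<and> ?psi k \<and> \<not> ?psi (k \<oplus> \<one>)"
  proof (rule ccontr)
    assume "\<not> (\<exists>k\<in>D. k \<prec> A \<oplus> \<one> \<and> ?psi k \<and> \<not> ?psi (k \<oplus> \<one>))"
    then have st: "\<And>k. k \<in> D \<Longrightarrow> k \<prec> A \<oplus> \<one> \<Longrightarrow> ?psi k \<Longrightarrow> ?psi (k \<oplus> \<one>)" by blast
    have "?psi A"
    proof (rule M_ind_cl[where P="?Psi" and e=e0 and x=kv and a="A \<oplus> \<one>" and Q="?psi" and k=A])
      show "M_ISigma (Suc n) M K" by (rule Mind)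
      show "Cl K True (Suc n) ?Psi" by (rule Psi)
      show "env_in K e0" by (rule e0)
      show "A \<oplus> \<one> \<in> M" by (rule A1)
      show "\<And>k. k \<in> D \<Longrightarrow> ?Psi (e0(kv:=k)) = ?psi k" by (rule val)
      show "?psi \<zero>" by (rule psi0)
      show "\<And>k. k \<in> D \<Longrightarrow> k \<prec> A \<oplus> \<one> \<Longrightarrow> ?psi k \<Longrightarrow> ?psi (k \<oplus> \<one>)" by (rule st)
      show "A \<in> D" by (rule AD)
      show "A \<prec> A \<oplus> \<one>" using AD by simp
    qed
    then obtain d where "d \<in> D" "d \<prec> A" "A \<prec> d \<or> A = d" by blast
    then show False using AD asym by blast
  qed
  then obtain k where k: "k \<in> D" "?psi k" "\<not> ?psi (k \<oplus> \<one>)" by blast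
  then obtain d b where db: "d \<in> D" "d \<prec> A" "k \<prec> d \<or> k = d" "b \<in> D"
    "\<forall>u\<in>D. u \<prec> a \<longrightarrow> (\<not> bit u d \<or> (\<exists>w\<in>D. w \<prec> b \<and> R (e(x:=u, y:=w))))" by blast
  have claim: "bit u d" if u: "u \<in> D" "u \<prec> a" and w0: "w0 \<in> D" "R (e(x:=u, y:=w0))" for u w0
  proof (rule ccontr)
    assume nb: "\<not> bit u d"
    obtain p where p: "p \<in> D" "E u p" using Etot u by blast
    have p0: "\<zero> \<prec> p" using E_pos u p by blast
    have d'A: "d \<oplus> p \<prec> A" by (rule bit_add_lt[OF u(1) db(1) p(1) aD AD p(2) A(2) nb u(2) db(2)])
    have dd: "d \<prec> d \<oplus> p" using less_add db p p0 by blast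
    have "k \<prec> d \<oplus> p" by (rule le_less_trans[OF _ _ _ db(3) dd]) (use k db p in simp_all)
    then have kd: "k \<oplus> \<one> \<preceq> d \<oplus> p" using less_succ_le k db p by simp
    obtain m where m: "m \<in> D" "b \<preceq> m" "w0 \<oplus> \<one> \<preceq> m" using max_ex[of b "w0 \<oplus> \<one>"] db w0 by auto
    have "\<forall>u'\<in>D. u' \<prec> a \<longrightarrow> (\<not> bit u' (d \<oplus> p) \<or> (\<exists>w\<in>D. w \<prec> m \<and> R (e(x:=u', y:=w))))"
    proof (intro ballI impI)
      fix u' assume u': "u' \<in> D" "u' \<prec> a"
      show "\<not> bit u' (d \<oplus> p) \<or> (\<exists>w\<in>D. w \<prec> m \<and> R (e(x:=u', y:=w)))"
      proof (cases "bit u' (d \<oplus> p)")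
        case False then show ?thesis by blast
      next
        case True
        then have "bit u' d \<or> u' = u" using bit_add[OF u(1) db(1) p(1) p(2) nb u'(1)] by simp
        then show ?thesis
        proof
          assume "bit u' d"
          then obtain w where w: "w \<in> D" "w \<prec> b" "R (e(x:=u', y:=w))" using db(5) u' by blast
          have "w \<prec> m" using less_le_trans[of w b m] w m db by simp
          then show ?thesis using w by blast
        next
          assume "u' = u"
          moreover have "w0 \<prec> m" using less_le_trans[of w0 "w0 \<oplus> \<one>" m] w0 m by simp
          ultimately show ?thesis using w0 by blast
        qed
      qed
    qed
    then have "?psi (k \<oplus> \<one>)" using d'A kd m db p by (intro bexI[of _ "d \<oplus> p"]) auto
    then show False using k by blast
  qed
  have fin: "\<forall>u\<in>D. u \<prec> a \<longrightarrow>
     (((\<exists>w\<in>D. R (e(x:=u, y:=w))) \<longleftrightarrow> bit u d) \<and>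
      ((\<exists>w\<in>D. R (e(x:=u, y:=w))) \<longleftrightarrow> (\<exists>w\<in>D. w \<prec> b \<and> R (e(x:=u, y:=w)))))"
  proof (intro ballI impI conjI)
    fix u assume u: "u \<in> D" "u \<prec> a"
    show "(\<exists>w\<in>D. R (e(x:=u, y:=w))) = bit u d"
    proof
      assume "\<exists>w\<in>D. R (e(x:=u, y:=w))" then show "bit u d" using claim u by blast
    next
      assume "bit u d" then show "\<exists>w\<in>D. R (e(x:=u, y:=w))" using db(5) u by blast
    qed
    show "(\<exists>w\<in>D. R (e(x:=u, y:=w))) = (\<exists>w\<in>D. w \<prec> b \<and> R (e(x:=u, y:=w)))"
    proof
      assume "\<exists>w\<in>D. R (e(x:=u, y:=w))" then have "bit u d" using claim u by blast
      then show "\<exists>w\<in>D. w \<prec> b \<and> R (e(x:=u, y:=w))" using db(5) u by blast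
    next
      assume "\<exists>w\<in>D. w \<prec> b \<and> R (e(x:=u, y:=w))" then show "\<exists>w\<in>D. R (e(x:=u, y:=w))" by blast
    qed
  qed
  then show ?thesis using db by blast
qed

lemma bqP: "\<And>P u w. u \<noteq> w \<Longrightarrow> Cl K False n P \<Longrightarrow> Cl K False n (bexP K u w P)"
  using Pi_bex[OF order.refl] by blast

lemma i_ii:
  assumes Mind: "M_ISigma (Suc n) M K"
  shows "\<forall>f x e a. Sigma (Suc n) f \<and> env_in K e \<and> a \<in> M \<longrightarrow>
              (\<exists>c\<in>dom K. \<forall>u\<in>dom K. lt K u a \<longrightarrow>
                 (sat K (e(x := u)) f \<longleftrightarrow> bit_in K eps vx vy u c))"
proof (intro allI impI)
  fix f and x :: nat and e a assume h: "Sigma (Suc n) f \<and> env_in K e \<and> a \<in> M"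
  then have e: "env_in K e" and a: "a \<in> M" by auto
  obtain y R where yR: "y \<notin> {x}" "Cl K False n R" "\<forall>e. env_in K e \<longrightarrow> sat K e f = (\<exists>a\<in>D. R (e(y:=a)))"
    using NF[OF nz bqP bnd Cl_sat[of True "Suc n" f K], of "{x}"] h by blast
  obtain d b where db: "d \<in> D" "\<forall>u\<in>D. u \<prec> a \<longrightarrow> (((\<exists>w\<in>D. R (e(x:=u, y:=w))) \<longleftrightarrow> bit u d))"
    using core[OF Mind yR(2) _ e a, of x y] yR(1) by blast
  show "\<exists>c\<in>dom K. \<forall>u\<in>dom K. lt K u a \<longrightarrow> (sat K (e(x := u)) f \<longleftrightarrow> bit_in K eps vx vy u c)"
  proof (intro bexI[of _ d] ballI impI)
    fix u assume u: "u \<in> D" "u \<prec> a"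
    have "sat K (e(x := u)) f = (\<exists>w\<in>D. R (e(x:=u, y:=w)))" using yR(3) env_in_upd[OF e u(1)] by simp
    then show "sat K (e(x := u)) f \<longleftrightarrow> bit_in K eps vx vy u d" using db u by simp
  qed (use db in auto)
qed

lemma i_iii:
  assumes Mind: "M_ISigma (Suc n) M K"
  shows "\<forall>g x y e a. Pi n g \<and> x \<noteq> y \<and> env_in K e \<and> a \<in> M \<longrightarrow>
              (\<exists>b\<in>dom K. \<forall>u\<in>dom K. lt K u a \<longrightarrow>
                 ((\<exists>w\<in>dom K. sat K (e(x := u, y := w)) g)
                  \<longleftrightarrow> (\<exists>w\<in>dom K. lt K w b \<and> sat K (e(x := u, y := w)) g)))"
proof (intro allI impI)
  fix g and x y :: nat and e a assume h: "Pi n g \<and> x \<noteq> y \<and> env_in K e \<and> a \<in> M"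
  obtain d b where db: "d \<in> D" "b \<in> D" "\<forall>u\<in>D. u \<prec> a \<longrightarrow>
     (((\<exists>w\<in>D. sat K (e(x:=u, y:=w)) g) \<longleftrightarrow> bit u d) \<and>
      ((\<exists>w\<in>D. sat K (e(x:=u, y:=w)) g) \<longleftrightarrow> (\<exists>w\<in>D. w \<prec> b \<and> sat K (e(x:=u, y:=w)) g)))"
    using core[OF Mind Cl_sat[of False n g K], of x y e a] h by blast
  then show "\<exists>b\<in>dom K. \<forall>u\<in>dom K. lt K u a \<longrightarrow>
                 ((\<exists>w\<in>dom K. sat K (e(x := u, y := w)) g)
                  \<longleftrightarrow> (\<exists>w\<in>dom K. lt K w b \<and> sat K (e(x := u, y := w)) g))" by blast
qed

lemma ii_i:
  assumes H: "\<forall>f x e a. Sigma (Suc n) f \<and> env_in K e \<and> a \<in> M \<longrightarrow>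
              (\<exists>c\<in>dom K. \<forall>u\<in>dom K. lt K u a \<longrightarrow>
                 (sat K (e(x := u)) f \<longleftrightarrow> bit_in K eps vx vy u c))"
  shows "M_ISigma (Suc n) M K"
  unfolding M_ISigma_def
proof (intro allI impI)
  fix f x e a assume h: "Sigma (Suc n) f \<and> env_in K e \<and> a \<in> M"
    and ind: "sat K (e(x := \<zero>)) f \<and> (\<forall>b\<in>D. b \<prec> a \<longrightarrow> sat K (e(x := b)) f \<longrightarrow> sat K (e(x := b \<oplus> \<one>)) f)"
  then have e: "env_in K e" and a: "a \<in> M" by auto
  have aD: "a \<in> D" using a MD by blast
  obtain c where c: "c \<in> D" "\<forall>u\<in>D. u \<prec> a \<longrightarrow> (sat K (e(x := u)) f \<longleftrightarrow> bit u c)" using H h by blast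
  obtain av where av: "av \<notin> {x}" using fresh_var[of "{x}"] by auto
  obtain cv where cv: "cv \<notin> {x, av}" using fresh_var[of "{x, av}"] by auto
  define e1 where "e1 = e(av := a, cv := c)"
  have e1: "env_in K e1" unfolding e1_def using e aD c by (auto intro!: env_in_upd)
  let ?P = "\<lambda>e'. \<not> (e' x \<prec> e' av) \<or> bit (e' x) (e' cv)"
  have P: "Cl K True 0 ?P"
    using Cl0_disj[OF Cl0_neg[OF Cl0_lt[of K True "Var x" "Var av"]] Cl_bit[of x cv True 0]] cv by simp
  let ?Q = "\<lambda>t. \<not> (t \<prec> a) \<or> bit t c"
  have Qall: "?Q t" if t: "t \<in> D" for t
  proof (rule ind_pred[where P="?P" and e=e1 and x=x and b=True and Q="?Q"])
    fix t assume "t \<in> D"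
    show "?P (e1(x:=t)) = ?Q t" using av cv unfolding e1_def by simp
  next
    show "?Q \<zero>" using c ind by auto
  next
    fix t assume t: "t \<in> D" and Qt: "?Q t"
    show "?Q (t \<oplus> \<one>)"
    proof (cases "t \<oplus> \<one> \<prec> a")
      case False then show ?thesis by blast
    next
      case True
      have ta: "t \<prec> a" by (rule trans[OF _ _ _ less_add1[OF t] True]) (use t aD in simp_all)
      then have "sat K (e(x := t)) f" using Qt c t by blast
      then have "sat K (e(x := t \<oplus> \<one>)) f" using ind t ta by blast
      then show ?thesis using c True t by simp
    qed
  qed (use P e1 t in auto)
  show "\<forall>b\<in>D. b \<prec> a \<longrightarrow> sat K (e(x := b)) f"
    using Qall c by blast
qed

lemma iii_i:
  assumes H: "\<forall>g x y e a. Pi n g \<and> x \<noteq> y \<and> env_in K e \<and> a \<in> M \<longrightarrow>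
              (\<exists>b\<in>dom K. \<forall>u\<in>dom K. lt K u a \<longrightarrow>
                 ((\<exists>w\<in>dom K. sat K (e(x := u, y := w)) g)
                  \<longleftrightarrow> (\<exists>w\<in>dom K. lt K w b \<and> sat K (e(x := u, y := w)) g)))"
  shows "M_ISigma (Suc n) M K"
  unfolding M_ISigma_def
proof (intro allI impI)
  fix f x e a assume h: "Sigma (Suc n) f \<and> env_in K e \<and> a \<in> M"
    and ind: "sat K (e(x := \<zero>)) f \<and> (\<forall>b\<in>D. b \<prec> a \<longrightarrow> sat K (e(x := b)) f \<longrightarrow> sat K (e(x := b \<oplus> \<one>)) f)"
  then have e: "env_in K e" and a: "a \<in> M" by auto
  have aD: "a \<in> D" using a MD by blast
  obtain y R where yR: "y \<notin> {x}" "Cl K False n R" "\<forall>e. env_in K e \<longrightarrow> sat K e f = (\<exists>a\<in>D. R (e(y:=a)))"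
    using NF[OF nz bqP bnd Cl_sat[of True "Suc n" f K], of "{x}"] h by blast
  obtain g where g: "Pi n g" "\<forall>e. env_in K e \<longrightarrow> R e = sat K e g" using yR(2) unfolding Cl_def by blast
  have Rg: "R (e(x:=u, y:=w)) = sat K (e(x:=u, y:=w)) g" if "u \<in> D" "w \<in> D" for u w
    using g(2) e that by (simp add: env_in_upd)
  have fR: "sat K (e(x := u)) f = (\<exists>w\<in>D. R (e(x:=u, y:=w)))" if "u \<in> D" for u
    using yR(3) env_in_upd[OF e that] by simp
  have hh: "Pi n g \<and> x \<noteq> y \<and> env_in K e \<and> a \<in> M" using g(1) yR(1) e a by auto
  from H[rule_format, OF hh] obtain b where b: "b \<in> D" "\<forall>u\<in>D. u \<prec> a \<longrightarrow> ((\<exists>w\<in>D. sat K (e(x := u, y := w)) g)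
                  \<longleftrightarrow> (\<exists>w\<in>D. w \<prec> b \<and> sat K (e(x := u, y := w)) g))"
    by blast
  have bR: "\<forall>u\<in>D. u \<prec> a \<longrightarrow> ((\<exists>w\<in>D. R (e(x:=u, y:=w))) \<longleftrightarrow> (\<exists>w\<in>D. w \<prec> b \<and> R (e(x:=u, y:=w))))"
    using b Rg by (auto cong: conj_cong)
  obtain S where S: "indep K R S" using Cl_supp[OF yR(2)] by blast
  have fS: "finite S" using indep_finite[OF S] .
  obtain av where av: "av \<notin> S \<union> {x, y}" using fresh_var[of "S \<union> {x, y}"] fS by auto
  obtain bv where bv: "bv \<notin> S \<union> {x, y, av}" using fresh_var[of "S \<union> {x, y, av}"] fS by auto
  define e1 where "e1 = e(av := a, bv := b)"
  have e1: "env_in K e1" unfolding e1_def using e aD b by (auto intro!: env_in_upd)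
  let ?P = "\<lambda>e'. \<not> (e' x \<prec> e' av) \<or> bexP K y bv R e'"
  have lt: "Cl K False n (\<lambda>e'. \<not> (e' x \<prec> e' av))"
    using Cl_0[OF Cl0_neg[OF Cl0_lt[of K False "Var x" "Var av"]]] by simp
  have P: "Cl K False n ?P" by (rule Cl_disj[OF nz lt Pi_bex[OF order.refl _ yR(2)]]) (use bv in auto)
  have Req: "R (e1(x:=t, y:=w)) = R (e(x:=t, y:=w))" if "t \<in> D" "w \<in> D" for t w
    by (rule indep_eq[OF S]) (use that e e1 av bv in \<open>auto intro!: env_in_upd simp: e1_def\<close>)
  let ?Q = "\<lambda>t. \<not> (t \<prec> a) \<or> (\<exists>w\<in>D. w \<prec> b \<and> R (e(x:=t, y:=w)))"
  have val: "?P (e1(x:=t)) = ?Q t" if "t \<in> D" for t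
    unfolding bexP_def using av bv yR(1) Req that by (simp add: e1_def cong: conj_cong)
  have Qall: "?Q t" if t: "t \<in> D" for t
  proof -
    have "?P (e1(x:=t))"
    proof (rule ind_Pi[OF P order.refl e1])
      show "?P (e1(x:=\<zero>))" using val[of "\<zero>"] ind fR bR by auto
    next
      fix s assume s: "s \<in> D" and Ps: "?P (e1(x:=s))"
      have Qs: "?Q s" using val s Ps by simp
      have "?Q (s \<oplus> \<one>)"
      proof (cases "s \<oplus> \<one> \<prec> a")
        case False then show ?thesis by blast
      next
        case True
        have sa: "s \<prec> a" by (rule trans[OF _ _ _ less_add1[OF s] True]) (use s aD in simp_all)
        then have "sat K (e(x := s)) f" using Qs fR s by blast
        then have "sat K (e(x := s \<oplus> \<one>)) f" using ind s sa by blast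
        then show ?thesis using fR bR True s by simp
      qed
      then show "?P (e1(x:=s \<oplus> \<one>))" using val s by simp
    qed (rule t)
    then show ?thesis using val t by simp
  qed
  show "\<forall>b\<in>D. b \<prec> a \<longrightarrow> sat K (e(x := b)) f"
    using Qall fR by blast
qed

lemma main:
  "(M_ISigma (Suc n) M K \<longleftrightarrow>
           (\<forall>f x e a. Sigma (Suc n) f \<and> env_in K e \<and> a \<in> M \<longrightarrow>
              (\<exists>c\<in>dom K. \<forall>u\<in>dom K. lt K u a \<longrightarrow>
                 (sat K (e(x := u)) f \<longleftrightarrow> bit_in K eps vx vy u c))))
       \<and> (M_ISigma (Suc n) M K \<longleftrightarrow>
           (\<forall>g x y e a. Pi n g \<and> x \<noteq> y \<and> env_in K e \<and> a \<in> M \<longrightarrow>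
              (\<exists>b\<in>dom K. \<forall>u\<in>dom K. lt K u a \<longrightarrow>
                 ((\<exists>w\<in>dom K. sat K (e(x := u, y := w)) g)
                  \<longleftrightarrow> (\<exists>w\<in>dom K. lt K w b \<and> sat K (e(x := u, y := w)) g)))))"
proof (intro conjI iffI)
qed ((rule i_ii, assumption) | (rule ii_i, assumption) | (rule i_iii, assumption) | (rule iii_i, assumption))+


end



theorem lemma4p5:
  fixes n :: nat and M :: "'a set" and K :: "'a struc"
    and eps :: fm and vx vy :: nat
  assumes "IDelta0_exp (restr K M) eps vx vy"
    and "ISigma_exp n K eps vx vy"
    and "end_ext M K"
  shows "(M_ISigma (Suc n) M K \<longleftrightarrow>
           (\<forall>f x e a. Sigma (Suc n) f \<and> env_in K e \<and> a \<in> M \<longrightarrow>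
              (\<exists>c\<in>dom K. \<forall>u\<in>dom K. lt K u a \<longrightarrow>
                 (sat K (e(x := u)) f \<longleftrightarrow> bit_in K eps vx vy u c))))
       \<and> (M_ISigma (Suc n) M K \<longleftrightarrow>
           (\<forall>g x y e a. Pi n g \<and> x \<noteq> y \<and> env_in K e \<and> a \<in> M \<longrightarrow>
              (\<exists>b\<in>dom K. \<forall>u\<in>dom K. lt K u a \<longrightarrow>
                 ((\<exists>w\<in>dom K. sat K (e(x := u, y := w)) g)
                  \<longleftrightarrow> (\<exists>w\<in>dom K. lt K w b \<and> sat K (e(x := u, y := w)) g)))))"
proof -
  have PA: "PAminus K" and indn: "\<And>f x. Sigma n f \<Longrightarrow> ind K f x" and ex: "exp_ok K eps vx vy"
    using assms(2) unfolding ISigma_exp_def by auto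
  have ind0: "\<And>f x. delta0 f \<Longrightarrow> ind K f x" using indn hier_delta0 by blast
  interpret S: setting K eps vx vy n M
  proof (unfold_locales)
    show "PAminus K" by (rule PA)
    show "\<And>f x. delta0 f \<Longrightarrow> ind K f x" by (rule ind0)
    show "exp_ok K eps vx vy" by (rule ex)
    show "\<And>f x. Sigma n f \<Longrightarrow> ind K f x" by (rule indn)
    show "end_ext M K" by (rule assms(3))
    show "IDelta0_exp (restr K M) eps vx vy" by (rule assms(1))
  qed
  show ?thesis by (rule S.main)
qed

end
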